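(* Let $C_1,\dots,C_T\in\mathbb{R}^{n\times n}$ be symmetric with $0\preceq C_t\preceq I$, $T\ge1$, and let $\mathscr{B}^n_1$ be the set of density matrices. Run the following algorithm: start from $Y_1\in\mathscr{B}^n_1$; at each $t$ eigendecompose $Y_t=\widehat D\mathrm{diag}(\sigma_t)\widehat D^\top$, play the unit vector $\widehat D[:,j]$ with probability $\sigma_{t,j}$, receive $C_t$, and update $V_{t+1}=\frac{\exp(\ln Y_t-\eta C_t)}{\mathrm{Tr}\exp(\ln Y_t-\eta C_t)}=\widehat U\mathrm{diag}(v_{t+1})\widehat U^\top$, $Y_{t+1}=\widehat U\mathrm{diag}(\frac\alpha n+(1-\alpha)v_{t+1})\widehat U^\top$, with $\alpha=\frac1{T+1}$ and $\eta=\frac{\sqrt{\ln(n(1+T))}}{\sqrt T}$. Then $$\max_{[r,s]\subset[1,T]}\Big\{\sum_{t=r}^s\mathrm{Tr}(Y_tC_t)-\min_{U\in\mathscr{B}^n_1}\sum_{t=r}^s\mathrm{Tr}(UC_t)\Big\}\le O\Big(\sqrt{T\ln(n(1+T))}\Big).$$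
   Context: $\ln,\exp$ denote matrix logarithm/exponential. $O(\cdot)$ hides an absolute constant. *)

theory Defs
  imports "Jordan_Normal_Form.Matrix"
begin

(* Real n x n matrices are represented by Jordan_Normal_Form's 'real mat'
   restricted to carrier_mat n n; the dimension n is an ordinary nat, so the
   hidden constant of O(.) can be quantified before n. *)

definition mtrace :: "real mat \<Rightarrow> real" where
  "mtrace A = (\<Sum>i<dim_row A. A $$ (i, i))"

definition sym_mat :: "real mat \<Rightarrow> bool" where
  "sym_mat A \<longleftrightarrow> A\<^sup>T = A"

definition psd_mat :: "nat \<Rightarrow> real mat \<Rightarrow> bool" where
  "psd_mat n A \<longleftrightarrow> A \<in> carrier_mat n n \<and> sym_mat A \<and>
     (\<forall>v \<in> carrier_vec n. 0 \<le> v \<bullet> (A *\<^sub>v v))"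

definition pd_mat :: "nat \<Rightarrow> real mat \<Rightarrow> bool" where
  "pd_mat n A \<longleftrightarrow> A \<in> carrier_mat n n \<and> sym_mat A \<and>
     (\<forall>v \<in> carrier_vec n. v \<noteq> 0\<^sub>v n \<longrightarrow> 0 < v \<bullet> (A *\<^sub>v v))"

definition loewner_le :: "nat \<Rightarrow> real mat \<Rightarrow> real mat \<Rightarrow> bool" where
  "loewner_le n A B \<longleftrightarrow> A \<in> carrier_mat n n \<and> B \<in> carrier_mat n n \<and> psd_mat n (B - A)"

definition density_mats :: "nat \<Rightarrow> real mat set" where
  "density_mats n = {A. psd_mat n A \<and> mtrace A = 1}"

definition orth_mat :: "nat \<Rightarrow> real mat \<Rightarrow> bool" where
  "orth_mat n Q \<longleftrightarrow> Q \<in> carrier_mat n n \<and> Q\<^sup>T * Q = 1\<^sub>m n"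

definition mat_fun :: "(real \<Rightarrow> real) \<Rightarrow> real mat \<Rightarrow> real mat" where
  "mat_fun f A = (SOME M. \<exists>Q lam. orth_mat (dim_row A) Q \<and>
      A = Q * mat_diag (dim_row A) lam * Q\<^sup>T \<and>
      M = Q * mat_diag (dim_row A) (\<lambda>j. f (lam j)) * Q\<^sup>T)"

definition mat_exp :: "real mat \<Rightarrow> real mat" where
  "mat_exp = mat_fun exp"

definition mat_ln :: "real mat \<Rightarrow> real mat" where
  "mat_ln = mat_fun ln"

end

theory Submission
  imports Defs "Jordan_Normal_Form.Spectral_Radius" "Jordan_Normal_Form.Schur_Decomposition"
begin

lemma sym_real_eigen:
  fixes A :: "real mat"
  assumes A: "A \<in> carrier_mat n n" and sym: "A\<^sup>T = A" and n: "n > 0"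
  shows "\<exists>e u. u \<in> carrier_vec n \<and> u \<bullet> u = 1 \<and> A *\<^sub>v u = e \<cdot>\<^sub>v u"
proof -
  define AC where "AC = map_mat complex_of_real A"
  have AC: "AC \<in> carrier_mat n n" using A unfolding AC_def by auto
  from spectrum_non_empty[OF AC n] obtain k where "k \<in> spectrum AC" by auto
  then obtain v where v: "v \<in> carrier_vec n" "v \<noteq> 0\<^sub>v n" and ev: "AC *\<^sub>v v = k \<cdot>\<^sub>v v"
    unfolding spectrum_def eigenvalue_def eigenvector_def using AC by auto
  define a where "a = (\<lambda>i. Re (v $ i))"
  define b where "b = (\<lambda>i. Im (v $ i))"
  have comp: "(\<Sum>j<n. A $$ (i,j) * a j) = Re k * a i - Im k * b i \<and>
              (\<Sum>j<n. A $$ (i,j) * b j) = Im k * a i + Re k * b i" if i: "i < n" for i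
  proof -
    have "(AC *\<^sub>v v) $ i = (\<Sum>j<n. complex_of_real (A $$ (i,j)) * v $ j)"
      using i A v AC unfolding AC_def by (auto simp: scalar_prod_def lessThan_atLeast0 intro!: sum.cong)
    moreover have "(AC *\<^sub>v v) $ i = k * v $ i" using ev i v by auto
    ultimately have e: "(\<Sum>j<n. complex_of_real (A $$ (i,j)) * v $ j) = k * v $ i" by simp
    have "Re (\<Sum>j<n. complex_of_real (A $$ (i,j)) * v $ j) = (\<Sum>j<n. A $$ (i,j) * a j)"
      unfolding a_def by (simp add: Re_sum)
    moreover have "Im (\<Sum>j<n. complex_of_real (A $$ (i,j)) * v $ j) = (\<Sum>j<n. A $$ (i,j) * b j)"
      unfolding b_def by (simp add: Im_sum)
    ultimately show ?thesis using e unfolding a_def b_def by auto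
  qed
  have symA: "A $$ (i,j) = A $$ (j,i)" if "i < n" "j < n" for i j
    using arg_cong[OF sym, of "\<lambda>M. M $$ (j,i)"] that A by auto
  have "(\<Sum>i<n. a i * (\<Sum>j<n. A $$ (i,j) * b j)) = (\<Sum>i<n. b i * (\<Sum>j<n. A $$ (i,j) * a j))"
  proof -
    have "(\<Sum>i<n. a i * (\<Sum>j<n. A $$ (i,j) * b j)) = (\<Sum>i<n. \<Sum>j<n. a i * A $$ (i,j) * b j)"
      by (simp add: sum_distrib_left mult.assoc)
    also have "\<dots> = (\<Sum>j<n. \<Sum>i<n. a i * A $$ (i,j) * b j)" by (rule sum.swap)
    also have "\<dots> = (\<Sum>j<n. b j * (\<Sum>i<n. A $$ (j,i) * a i))"
      by (auto simp: sum_distrib_left symA intro!: sum.cong)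
    finally show ?thesis .
  qed
  also have "\<dots> = (\<Sum>i<n. Re k * (a i * b i) - Im k * (b i)^2)"
  proof (intro sum.cong refl)
    fix i assume "i \<in> {..<n}"
    hence eq: "(\<Sum>j<n. A $$ (i,j) * a j) = Re k * a i - Im k * b i" using comp by auto
    show "b i * (\<Sum>j<n. A $$ (i,j) * a j) = Re k * (a i * b i) - Im k * (b i)^2"
      by (simp only: eq) (simp add: power2_eq_square algebra_simps)
  qed
  also have "(\<Sum>i<n. a i * (\<Sum>j<n. A $$ (i,j) * b j)) = (\<Sum>i<n. Im k * (a i)^2 + Re k * (a i * b i))"
  proof (intro sum.cong refl)
    fix i assume "i \<in> {..<n}"
    hence eq: "(\<Sum>j<n. A $$ (i,j) * b j) = Im k * a i + Re k * b i" using comp by auto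
    show "a i * (\<Sum>j<n. A $$ (i,j) * b j) = Im k * (a i)^2 + Re k * (a i * b i)"
      by (simp only: eq) (simp add: power2_eq_square algebra_simps)
  qed
  finally have "(\<Sum>i<n. Im k * (a i)^2 + Re k * (a i * b i)) = (\<Sum>i<n. Re k * (a i * b i) - Im k * (b i)^2)" .
  hence "Im k * (\<Sum>i<n. (a i)^2 + (b i)^2) = 0"
    by (simp add: sum.distrib sum_subtractf sum_distrib_left algebra_simps)
  moreover have "(\<Sum>i<n. (a i)^2 + (b i)^2) > 0"
  proof -
    obtain i where i: "i < n" "v $ i \<noteq> 0" using v by (metis dim_vec eq_vecI index_zero_vec(1) carrier_vecD index_zero_vec(2))
    hence "(a i)^2 + (b i)^2 > 0" unfolding a_def b_def using complex_eq_iff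
      by (metis add_pos_nonneg not_sum_power2_lt_zero sum_power2_gt_zero_iff zero_complex.simps)
    thus ?thesis using i by (intro sum_pos2[of _ i]) auto
  qed
  ultimately have k0: "Im k = 0" by simp
  have ea: "A *\<^sub>v vec n a = Re k \<cdot>\<^sub>v vec n a" and eb: "A *\<^sub>v vec n b = Re k \<cdot>\<^sub>v vec n b"
    using comp k0 A by (auto intro!: eq_vecI simp: scalar_prod_def lessThan_atLeast0)
  have "\<exists>w. w \<in> carrier_vec n \<and> w \<noteq> 0\<^sub>v n \<and> A *\<^sub>v w = Re k \<cdot>\<^sub>v w"
  proof (cases "vec n a = 0\<^sub>v n")
    case True
    have "vec n b \<noteq> 0\<^sub>v n"
    proof
      assume "vec n b = 0\<^sub>v n"
      have "v $ i = 0" if i: "i < n" for i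
      proof -
        have "vec n a $ i = 0" "vec n b $ i = 0" using True \<open>vec n b = 0\<^sub>v n\<close> i by auto
        thus ?thesis using i unfolding a_def b_def by (simp add: complex_eq_iff)
      qed
      hence "v = 0\<^sub>v n" using v by (intro eq_vecI) auto
      with v show False by simp
    qed
    thus ?thesis using eb by (intro exI[of _ "vec n b"]) auto
  next
    case False thus ?thesis using ea by (intro exI[of _ "vec n a"]) auto
  qed
  then obtain w where w: "w \<in> carrier_vec n" "w \<noteq> 0\<^sub>v n" "A *\<^sub>v w = Re k \<cdot>\<^sub>v w" by blast
  have ww: "w \<bullet> w > 0"
  proof -
    obtain i where i: "i < n" "w $ i \<noteq> 0" using w by (metis eq_vecI carrier_vecD index_zero_vec)
    have "w \<bullet> w = (\<Sum>j<n. (w $ j)^2)" using w by (simp add: scalar_prod_def power2_eq_square lessThan_atLeast0)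
    also have "\<dots> > 0" using i by (intro sum_pos2[of _ i]) auto
    finally show ?thesis .
  qed
  define u where "u = (1 / sqrt (w \<bullet> w)) \<cdot>\<^sub>v w"
  have "u \<bullet> u = 1" unfolding u_def using w ww
    by (simp add: scalar_prod_smult_left scalar_prod_smult_right)
  moreover have "A *\<^sub>v u = Re k \<cdot>\<^sub>v u" unfolding u_def using w A
    by (simp add: mult_mat_vec smult_smult_assoc mult.commute)
  ultimately show ?thesis using w unfolding u_def by auto
qed

lemma mat_diag_dims[simp]: "dim_row (mat_diag n f) = n" "dim_col (mat_diag n f) = n"
  unfolding mat_diag_def by auto

lemma mult_carrier_sq[simp]: "A \<in> carrier_mat n n \<Longrightarrow> B \<in> carrier_mat n n \<Longrightarrow> A * B \<in> carrier_mat n n"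
  by auto

lemma conj_real_vec[simp]: "conjugate (v :: real vec) = v"
  by (rule eq_vecI) auto

lemma orth_mat_right: assumes "orth_mat n Q" shows "Q * Q\<^sup>T = 1\<^sub>m n"
  using assms unfolding orth_mat_def
  by (intro mat_mult_left_right_inverse[of "Q\<^sup>T" n Q]) auto

lemma orth_completion:
  fixes u :: "real vec"
  assumes u: "u \<in> carrier_vec n" and uu: "u \<bullet> u = 1" and n: "n > 0"
  shows "\<exists>W. orth_mat n W \<and> col W 0 = u"
proof -
  interpret cof_vec_space n "TYPE(real)" .
  have u0: "u \<noteq> 0\<^sub>v n" using uu u by auto
  define b where "b = basis_completion u"
  from basis_completion[OF u u0, folded b_def]
  have b: "set b \<subseteq> carrier_vec n" and dist_b: "distinct b" and indep: "\<not> lin_dep (set b)"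
    and hdb: "hd b = u" and len_b: "length b = n" by auto
  from hdb len_b n obtain vs where bv: "b = u # vs" by (cases b, auto)
  define ws where "ws = gram_schmidt n b"
  from gram_schmidt_result[OF b dist_b indep ws_def]
  have ws: "set ws \<subseteq> carrier_vec n" "corthogonal ws" "length ws = n"
    by (auto simp: len_b)
  have hdws: "hd ws = u" unfolding ws_def bv using u by simp
  define ws' where "ws' = map (\<lambda>w. (1 / sqrt (w \<bullet> w)) \<cdot>\<^sub>v w) ws"
  have ws'c: "set ws' \<subseteq> carrier_vec n" using ws unfolding ws'_def by auto
  have lws': "length ws' = n" using ws unfolding ws'_def by auto
  define W where "W = mat_of_cols n ws'"
  have W: "W \<in> carrier_mat n n" unfolding W_def using lws' by (metis mat_of_cols_carrier(1))
  have colW: "col W i = ws' ! i" if "i < n" for i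
    unfolding W_def using that lws' ws'c by (intro col_mat_of_cols) auto
  have pos: "ws ! i \<bullet> ws ! i > 0" if i: "i < n" for i
  proof -
    have wi: "ws ! i \<in> carrier_vec n" using ws i by auto
    have "ws ! i \<bullet> ws ! i \<noteq> 0" using corthogonalD[OF ws(2), of i i] ws i by auto
    moreover have "ws ! i \<bullet> ws ! i \<ge> 0" using wi
      by (simp add: scalar_prod_def sum_nonneg)
    ultimately show ?thesis by auto
  qed
  have ip: "ws' ! i \<bullet> ws' ! j = (if i = j then 1 else 0)" if i: "i < n" and j: "j < n" for i j
  proof -
    have wi: "ws ! i \<in> carrier_vec n" and wj: "ws ! j \<in> carrier_vec n" using ws i j by auto
    have "ws' ! i \<bullet> ws' ! j = (1 / sqrt (ws ! i \<bullet> ws ! i)) * (1 / sqrt (ws ! j \<bullet> ws ! j)) * (ws ! i \<bullet> ws ! j)"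
      unfolding ws'_def using i j ws wi wj by (simp add: scalar_prod_smult_left scalar_prod_smult_right)
    moreover have "i \<noteq> j \<Longrightarrow> ws ! i \<bullet> ws ! j = 0" using corthogonalD[OF ws(2), of i j] ws i j by auto
    moreover have "i = j \<Longrightarrow> (1 / sqrt (ws ! i \<bullet> ws ! i)) * (1 / sqrt (ws ! j \<bullet> ws ! j)) * (ws ! i \<bullet> ws ! j) = 1"
      using pos[OF i] by (simp add: real_sqrt_mult[symmetric])
    ultimately show ?thesis by auto
  qed
  have "W\<^sup>T * W = 1\<^sub>m n"
  proof (rule eq_matI)
    fix i j assume "i < dim_row (1\<^sub>m n :: real mat)" "j < dim_col (1\<^sub>m n :: real mat)"
    hence i: "i < n" and j: "j < n" by auto
    have "(W\<^sup>T * W) $$ (i,j) = col W i \<bullet> col W j" using W i j by simp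
    thus "(W\<^sup>T * W) $$ (i,j) = 1\<^sub>m n $$ (i,j)" using ip[OF i j] colW[OF i] colW[OF j] i j by simp
  qed (use W in auto)
  moreover have "col W 0 = u"
  proof -
    have "ws ! 0 = u" using hdws ws n by (metis hd_conv_nth list.size(3) not_less0 gr_implies_not0)
    thus ?thesis using colW[OF n] ws n uu unfolding ws'_def by simp
  qed
  ultimately show ?thesis using W unfolding orth_mat_def by auto
qed

lemma spectral:
  fixes A :: "real mat"
  assumes "A \<in> carrier_mat n n" and "A\<^sup>T = A"
  shows "\<exists>Q lam. orth_mat n Q \<and> A = Q * mat_diag n lam * Q\<^sup>T"
  using assms
proof (induction n arbitrary: A)
  case 0
  have "A = 1\<^sub>m 0 * mat_diag 0 (\<lambda>_. 0) * (1\<^sub>m 0)\<^sup>T" using 0 by (intro eq_matI) auto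
  moreover have "orth_mat 0 (1\<^sub>m 0)" unfolding orth_mat_def by auto
  ultimately show ?case by blast
next
  case (Suc n1 A)
  define n where "n = Suc n1"
  have A: "A \<in> carrier_mat n n" and sym: "A\<^sup>T = A" using Suc.prems n_def by auto
  obtain e u where u: "u \<in> carrier_vec n" "u \<bullet> u = 1" "A *\<^sub>v u = e \<cdot>\<^sub>v u"
    using sym_real_eigen[OF A sym] n_def by auto
  obtain W where oW: "orth_mat n W" and cW: "col W 0 = u"
    using orth_completion[OF u(1,2)] n_def by auto
  have W: "W \<in> carrier_mat n n" and WW: "W\<^sup>T * W = 1\<^sub>m n" using oW unfolding orth_mat_def by auto
  have WW': "W * W\<^sup>T = 1\<^sub>m n" using orth_mat_right[OF oW] .
  define A' where "A' = W\<^sup>T * A * W"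
  have A': "A' \<in> carrier_mat n n" unfolding A'_def using W A by auto
  have symA': "A'\<^sup>T = A'"
  proof -
    have "A'\<^sup>T = W\<^sup>T * (W\<^sup>T * A)\<^sup>T" unfolding A'_def
      by (rule transpose_mult[of _ n n]) (use W A in auto)
    also have "(W\<^sup>T * A)\<^sup>T = A\<^sup>T * W" using transpose_mult[of "W\<^sup>T" n n A n] W A by simp
    finally show ?thesis unfolding A'_def using sym W A by simp
  qed
  have colW: "col W i \<bullet> col W j = (if i = j then 1 else 0)" if "i < n" "j < n" for i j
  proof -
    have "(W\<^sup>T * W) $$ (i,j) = col W i \<bullet> col W j" using W that by simp
    thus ?thesis using WW that by simp
  qed
  have A'0: "A' $$ (i,0) = (if i = 0 then e else 0)" if i: "i < n" for i
  proof -
    have "A' = W\<^sup>T * (A * W)" unfolding A'_def using W A by simp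
    hence "A' $$ (i,0) = col W i \<bullet> col (A * W) 0" using W A i n_def by simp
    also have "col (A * W) 0 = A *\<^sub>v col W 0" using A W n_def by (intro eq_vecI) auto
    also have "\<dots> = e \<cdot>\<^sub>v col W 0" using u cW by simp
    also have "col W i \<bullet> (e \<cdot>\<^sub>v col W 0) = e * (col W i \<bullet> col W 0)"
      using W by (simp add: scalar_prod_smult_right)
    finally show ?thesis using colW[OF i, of 0] n_def by simp
  qed
  have A'0': "A' $$ (0,j) = (if j = 0 then e else 0)" if j: "j < n" for j
  proof -
    have "A' $$ (0,j) = A'\<^sup>T $$ (j,0)" using A' j n_def by simp
    thus ?thesis using symA' A'0[OF j] by simp
  qed
  define A3 where "A3 = mat n1 n1 (\<lambda>(i,j). A' $$ (Suc i, Suc j))"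
  have A3: "A3 \<in> carrier_mat n1 n1" unfolding A3_def by auto
  have symA3: "A3\<^sup>T = A3"
  proof (rule eq_matI)
    fix i j assume "i < dim_row A3" "j < dim_col A3"
    hence ij: "i < n1" "j < n1" using A3 by auto
    have "A' $$ (Suc j, Suc i) = A'\<^sup>T $$ (Suc i, Suc j)" using A' ij n_def by simp
    thus "A3\<^sup>T $$ (i, j) = A3 $$ (i, j)" using symA' ij unfolding A3_def by simp
  qed (use A3 in auto)
  obtain P lam where oP: "orth_mat n1 P" and A3P: "A3 = P * mat_diag n1 lam * P\<^sup>T"
    using Suc.IH[OF A3 symA3] by auto
  have P: "P \<in> carrier_mat n1 n1" and PP: "P\<^sup>T * P = 1\<^sub>m n1" using oP unfolding orth_mat_def by auto
  define B where "B = four_block_mat (1\<^sub>m 1) (0\<^sub>m 1 n1) (0\<^sub>m n1 1) P"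
  have B: "B \<in> carrier_mat n n" unfolding B_def n_def using P
    by (metis four_block_carrier_mat one_carrier_mat plus_1_eq_Suc)
  have BT: "B\<^sup>T = four_block_mat (1\<^sub>m 1) (0\<^sub>m 1 n1) (0\<^sub>m n1 1) P\<^sup>T"
    unfolding B_def using P transpose_four_block_mat[of "1\<^sub>m 1" 1 1 "0\<^sub>m 1 n1" n1 "0\<^sub>m n1 1" n1 P]
    by simp
  have BB: "B\<^sup>T * B = 1\<^sub>m n"
  proof -
    have "B\<^sup>T * B = four_block_mat (1\<^sub>m 1) (0\<^sub>m 1 n1) (0\<^sub>m n1 1) (P\<^sup>T * P)"
      unfolding BT unfolding B_def using P
      by (subst mult_four_block_mat[OF one_carrier_mat zero_carrier_mat zero_carrier_mat _ one_carrier_mat zero_carrier_mat zero_carrier_mat P]) auto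
    also have "\<dots> = 1\<^sub>m n" unfolding PP n_def using four_block_one_mat[of 1 n1] by simp
    finally show ?thesis .
  qed
  define lam' where "lam' = (\<lambda>i. if i = 0 then e else lam (i - 1))"
  define D1 where "D1 = mat_diag 1 (\<lambda>_. e)"
  have D: "mat_diag n lam' = four_block_mat D1 (0\<^sub>m 1 n1) (0\<^sub>m n1 1) (mat_diag n1 lam)"
    unfolding D1_def n_def lam'_def by (rule eq_matI) (auto simp: mat_diag_def)
  have A'B: "A' = four_block_mat D1 (0\<^sub>m 1 n1) (0\<^sub>m n1 1) A3"
  proof (rule eq_matI)
    fix i j assume "i < dim_row (four_block_mat D1 (0\<^sub>m 1 n1) (0\<^sub>m n1 1) A3)"
      "j < dim_col (four_block_mat D1 (0\<^sub>m 1 n1) (0\<^sub>m n1 1) A3)"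
    hence ij: "i < n" "j < n" unfolding D1_def n_def using A3 by (auto simp: mat_diag_def)
    show "A' $$ (i, j) = four_block_mat D1 (0\<^sub>m 1 n1) (0\<^sub>m n1 1) A3 $$ (i, j)"
    proof (cases "i = 0 \<or> j = 0")
      case True thus ?thesis using A'0 A'0' ij A3 unfolding D1_def n_def by (auto simp: mat_diag_def)
    next
      case False
      then obtain i' j' where "i = Suc i'" "j = Suc j'" by (metis not0_implies_Suc)
      thus ?thesis using ij A3 unfolding D1_def n_def A3_def by (auto simp: mat_diag_def)
    qed
  qed (use A' A3 n_def D1_def in auto)
  have D1: "D1 \<in> carrier_mat 1 1" unfolding D1_def by simp
  have diagc: "mat_diag n1 lam \<in> carrier_mat n1 n1" by simp
  have BDB: "B * mat_diag n lam' * B\<^sup>T = A'"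
  proof -
    have "B * mat_diag n lam' = four_block_mat D1 (0\<^sub>m 1 n1) (0\<^sub>m n1 1) (P * mat_diag n1 lam)"
      unfolding D B_def using P D1 diagc
      by (subst mult_four_block_mat[OF one_carrier_mat zero_carrier_mat zero_carrier_mat P D1 zero_carrier_mat zero_carrier_mat diagc]) auto
    hence "B * mat_diag n lam' * B\<^sup>T = four_block_mat D1 (0\<^sub>m 1 n1) (0\<^sub>m n1 1) (P * mat_diag n1 lam) *
       four_block_mat (1\<^sub>m 1) (0\<^sub>m 1 n1) (0\<^sub>m n1 1) P\<^sup>T" unfolding BT by simp
    also have "\<dots> = four_block_mat D1 (0\<^sub>m 1 n1) (0\<^sub>m n1 1) (P * mat_diag n1 lam * P\<^sup>T)"
      using P D1 diagc
      by (subst mult_four_block_mat[OF D1 zero_carrier_mat zero_carrier_mat _ one_carrier_mat zero_carrier_mat zero_carrier_mat]) auto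
    finally show ?thesis unfolding A'B A3P .
  qed
  define Q where "Q = W * B"
  have Q: "Q \<in> carrier_mat n n" unfolding Q_def using W B by simp
  have "Q\<^sup>T * Q = 1\<^sub>m n"
  proof -
    have WT: "W\<^sup>T \<in> carrier_mat n n" and BTc: "B\<^sup>T \<in> carrier_mat n n" using W B by auto
    have "Q\<^sup>T * Q = B\<^sup>T * W\<^sup>T * (W * B)" unfolding Q_def using W B
      by (simp add: transpose_mult[of _ n n])
    also have "\<dots> = B\<^sup>T * (W\<^sup>T * (W * B))" using WT BTc W B by (intro assoc_mult_mat) auto
    also have "W\<^sup>T * (W * B) = (W\<^sup>T * W) * B" using WT W B by (intro assoc_mult_mat[symmetric]) auto
    finally show ?thesis using WW BB B by simp
  qed
  hence oQ: "orth_mat n Q" using Q unfolding orth_mat_def by simp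
  have "Q * mat_diag n lam' * Q\<^sup>T = W * (B * mat_diag n lam' * B\<^sup>T) * W\<^sup>T"
    unfolding Q_def using W B by (simp add: transpose_mult[of _ n n] assoc_mult_mat[of _ n n _ n _ n])
  also have "\<dots> = W * A' * W\<^sup>T" unfolding BDB ..
  also have "\<dots> = (W * W\<^sup>T) * A * (W * W\<^sup>T)" unfolding A'_def using W A by (simp add: assoc_mult_mat[of _ n n _ n _ n])
  also have "\<dots> = A" unfolding WW' using A by simp
  finally show ?case using oQ n_def by metis
qed

definition sp :: "nat \<Rightarrow> real mat \<Rightarrow> (nat \<Rightarrow> real) \<Rightarrow> real mat" where
  "sp n Q a = Q * mat_diag n a * Q\<^sup>T"

lemma sp_carrier[simp]: "orth_mat n Q \<Longrightarrow> sp n Q a \<in> carrier_mat n n"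
  unfolding sp_def orth_mat_def by auto

lemma sp_dims[simp]: "orth_mat n Q \<Longrightarrow> dim_row (sp n Q a) = n" "orth_mat n Q \<Longrightarrow> dim_col (sp n Q a) = n"
  using sp_carrier by (auto simp del: sp_carrier)

lemma orthD: assumes "orth_mat n Q" shows "Q \<in> carrier_mat n n" "Q\<^sup>T \<in> carrier_mat n n"
  "Q\<^sup>T * Q = 1\<^sub>m n" "Q * Q\<^sup>T = 1\<^sub>m n"
  using assms orth_mat_right[OF assms] unfolding orth_mat_def by auto

lemma orth_cancel[simp]:
  assumes "orth_mat n Q" "X \<in> carrier_mat n n"
  shows "Q\<^sup>T * (Q * X) = X" "Q * (Q\<^sup>T * X) = X"
proof -
  note c = orthD[OF assms(1)]
  have "Q\<^sup>T * (Q * X) = (Q\<^sup>T * Q) * X" using c assms(2) by (intro assoc_mult_mat[symmetric]) auto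
  thus "Q\<^sup>T * (Q * X) = X" using c assms(2) by simp
  have "Q * (Q\<^sup>T * X) = (Q * Q\<^sup>T) * X" using c assms(2) by (intro assoc_mult_mat[symmetric]) auto
  thus "Q * (Q\<^sup>T * X) = X" using c assms(2) by simp
qed

lemma diag_merge[simp]: "X \<in> carrier_mat n k \<Longrightarrow> mat_diag n a * (mat_diag n b * X) = mat_diag n (\<lambda>i. a i * b i) * X"
proof -
  assume X: "X \<in> carrier_mat n k"
  have "mat_diag n a * (mat_diag n b * X) = (mat_diag n a * mat_diag n b) * X"
    using X by (intro assoc_mult_mat[symmetric]) auto
  thus ?thesis by simp
qed

lemma mtrace_comm:
  fixes A B :: "real mat"
  assumes A: "A \<in> carrier_mat n m" and B: "B \<in> carrier_mat m n"
  shows "mtrace (A * B) = mtrace (B * A)"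
proof -
  have "mtrace (A * B) = (\<Sum>i<n. \<Sum>k<m. A $$ (i,k) * B $$ (k,i))"
    unfolding mtrace_def using A B by (auto simp: scalar_prod_def lessThan_atLeast0 intro!: sum.cong)
  also have "\<dots> = (\<Sum>k<m. \<Sum>i<n. B $$ (k,i) * A $$ (i,k))"
    by (subst sum.swap) (simp add: mult.commute)
  also have "\<dots> = mtrace (B * A)"
    unfolding mtrace_def using A B by (auto simp: scalar_prod_def lessThan_atLeast0 intro!: sum.cong)
  finally show ?thesis .
qed

lemma mtrace_diag: "mtrace (mat_diag n a) = (\<Sum>i<n. a i)"
  unfolding mtrace_def mat_diag_def by auto

lemma mtrace_add: "A \<in> carrier_mat n n \<Longrightarrow> B \<in> carrier_mat n n \<Longrightarrow> mtrace (A + B) = mtrace A + mtrace B"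
  unfolding mtrace_def by (auto simp: sum.distrib)

lemma mtrace_minus: "A \<in> carrier_mat n n \<Longrightarrow> B \<in> carrier_mat n n \<Longrightarrow> mtrace (A - B) = mtrace A - mtrace B"
  unfolding mtrace_def by (auto simp: sum_subtractf)

lemma mtrace_smult: "A \<in> carrier_mat n n \<Longrightarrow> mtrace (c \<cdot>\<^sub>m A) = c * mtrace A"
  unfolding mtrace_def by (auto simp: sum_distrib_left)

lemma fc_unique:
  assumes o1: "orth_mat n Q1" and o2: "orth_mat n Q2"
    and eq: "sp n Q1 l1 = sp n Q2 l2"
  shows "sp n Q1 (\<lambda>j. f (l1 j)) = sp n Q2 (\<lambda>j. f (l2 j))"
proof -
  note c1 = orthD[OF o1] and c2 = orthD[OF o2]
  define R where "R = Q2\<^sup>T * Q1"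
  have R: "R \<in> carrier_mat n n" unfolding R_def using c1 c2 by simp
  have d1: "mat_diag n l1 \<in> carrier_mat n n" "mat_diag n l2 \<in> carrier_mat n n" by auto
  have "R * mat_diag n l1 = Q2\<^sup>T * (Q1 * mat_diag n l1 * Q1\<^sup>T) * Q1"
    unfolding R_def using c1 c2 o1 o2 by (simp add: assoc_mult_mat[of _ n n _ n _ n])
  also have "\<dots> = Q2\<^sup>T * (Q2 * mat_diag n l2 * Q2\<^sup>T) * Q1" using eq unfolding sp_def by simp
  also have "\<dots> = mat_diag n l2 * R"
    unfolding R_def using c1 c2 o1 o2 by (simp add: assoc_mult_mat[of _ n n _ n _ n])
  finally have RD: "R * mat_diag n l1 = mat_diag n l2 * R" .
  have RDf: "R * mat_diag n (\<lambda>j. f (l1 j)) = mat_diag n (\<lambda>j. f (l2 j)) * R"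
  proof (rule eq_matI)
    fix i j assume "i < dim_row (mat_diag n (\<lambda>j. f (l2 j)) * R)" "j < dim_col (mat_diag n (\<lambda>j. f (l2 j)) * R)"
    hence ij: "i < n" "j < n" using R by auto
    have "(R * mat_diag n l1) $$ (i,j) = (mat_diag n l2 * R) $$ (i,j)" using RD by simp
    hence "R $$ (i,j) * l1 j = l2 i * R $$ (i,j)"
      using ij R by (simp add: mat_diag_mult_right[OF R] mat_diag_mult_left[OF R])
    hence "R $$ (i,j) * f (l1 j) = f (l2 i) * R $$ (i,j)" by (cases "R $$ (i,j) = 0") auto
    thus "(R * mat_diag n (\<lambda>j. f (l1 j))) $$ (i, j) = (mat_diag n (\<lambda>j. f (l2 j)) * R) $$ (i, j)"
      using ij R by (simp add: mat_diag_mult_right[OF R] mat_diag_mult_left[OF R])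
  qed (use R in auto)
  have "sp n Q1 (\<lambda>j. f (l1 j)) = (Q2 * Q2\<^sup>T) * Q1 * mat_diag n (\<lambda>j. f (l1 j)) * Q1\<^sup>T"
    unfolding sp_def using c1 c2 by simp
  also have "\<dots> = Q2 * (R * mat_diag n (\<lambda>j. f (l1 j))) * Q1\<^sup>T"
    unfolding R_def using c1 c2 o1 o2 by (simp add: assoc_mult_mat[of _ n n _ n _ n])
  also have "\<dots> = Q2 * (mat_diag n (\<lambda>j. f (l2 j)) * R) * Q1\<^sup>T" unfolding RDf ..
  also have "\<dots> = Q2 * mat_diag n (\<lambda>j. f (l2 j)) * Q2\<^sup>T * (Q1 * Q1\<^sup>T)"
    unfolding R_def using c1 c2 o1 o2 by (simp add: assoc_mult_mat[of _ n n _ n _ n] del: orth_cancel)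
  also have "\<dots> = sp n Q2 (\<lambda>j. f (l2 j))" unfolding sp_def using c1 c2 by simp
  finally show ?thesis .
qed

lemma mat_fun_sp:
  assumes o: "orth_mat n Q"
  shows "mat_fun f (sp n Q lam) = sp n Q (\<lambda>j. f (lam j))"
proof -
  have dr: "dim_row (sp n Q lam) = n" using o by simp
  let ?P = "\<lambda>M. \<exists>Q' lam'. orth_mat n Q' \<and> sp n Q lam = Q' * mat_diag n lam' * Q'\<^sup>T \<and>
      M = Q' * mat_diag n (\<lambda>j. f (lam' j)) * Q'\<^sup>T"
  have ex: "?P (sp n Q (\<lambda>j. f (lam j)))" using o unfolding sp_def by blast
  have "?P (SOME M. ?P M)" by (rule someI[of ?P, OF ex])
  then obtain Q' lam' where o': "orth_mat n Q'" and e: "sp n Q lam = sp n Q' lam'"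
    and M: "(SOME M. ?P M) = sp n Q' (\<lambda>j. f (lam' j))" unfolding sp_def by blast
  have "mat_fun f (sp n Q lam) = (SOME M. ?P M)" unfolding mat_fun_def dr ..
  also have "\<dots> = sp n Q (\<lambda>j. f (lam j))" unfolding M using fc_unique[OF o' o e[symmetric]] .
  finally show ?thesis .
qed

lemma sp_transpose: "orth_mat n Q \<Longrightarrow> (sp n Q a)\<^sup>T = sp n Q a"
proof -
  assume o: "orth_mat n Q"
  note c = orthD[OF o]
  have dt: "(mat_diag n a)\<^sup>T = mat_diag n a" by (rule eq_matI) (auto simp: mat_diag_def)
  have "(sp n Q a)\<^sup>T = (Q\<^sup>T)\<^sup>T * (Q * mat_diag n a)\<^sup>T" unfolding sp_def
    by (rule transpose_mult[of _ n n]) (use c in auto)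
  also have "(Q * mat_diag n a)\<^sup>T = (mat_diag n a)\<^sup>T * Q\<^sup>T" by (rule transpose_mult[of _ n n]) (use c in auto)
  finally show ?thesis unfolding dt sp_def using c by (simp add: assoc_mult_mat[of _ n n _ n _ n])
qed

lemma sp_mult: "orth_mat n Q \<Longrightarrow> sp n Q a * sp n Q b = sp n Q (\<lambda>i. a i * b i)"
proof -
  assume o: "orth_mat n Q"
  note c = orthD[OF o]
  have "sp n Q a * sp n Q b = Q * mat_diag n a * (Q\<^sup>T * Q) * mat_diag n b * Q\<^sup>T"
    unfolding sp_def using c o by (simp add: assoc_mult_mat[of _ n n _ n _ n])
  thus ?thesis unfolding sp_def using c o by (simp add: assoc_mult_mat[of _ n n _ n _ n])
qed

lemma sp_add: "orth_mat n Q \<Longrightarrow> sp n Q a + sp n Q b = sp n Q (\<lambda>i. a i + b i)"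
proof -
  assume o: "orth_mat n Q"
  note c = orthD[OF o]
  have "mat_diag n a + mat_diag n b = mat_diag n (\<lambda>i. a i + b i)" by (rule eq_matI) (auto simp: mat_diag_def)
  moreover have "Q * mat_diag n a * Q\<^sup>T + Q * mat_diag n b * Q\<^sup>T = Q * (mat_diag n a + mat_diag n b) * Q\<^sup>T"
    using c by (simp add: add_mult_distrib_mat[of _ n n _ _ n] mult_add_distrib_mat[of _ n n _ n])
  ultimately show ?thesis unfolding sp_def by simp
qed

lemma sp_smult: "orth_mat n Q \<Longrightarrow> c \<cdot>\<^sub>m sp n Q a = sp n Q (\<lambda>i. c * a i)"
proof -
  assume o: "orth_mat n Q"
  note cc = orthD[OF o]
  have "c \<cdot>\<^sub>m mat_diag n a = mat_diag n (\<lambda>i. c * a i)" by (rule eq_matI) (auto simp: mat_diag_def)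
  moreover have "c \<cdot>\<^sub>m (Q * mat_diag n a * Q\<^sup>T) = Q * (c \<cdot>\<^sub>m mat_diag n a) * Q\<^sup>T"
  proof -
    have "Q * (c \<cdot>\<^sub>m mat_diag n a) = c \<cdot>\<^sub>m (Q * mat_diag n a)"
      by (rule mult_smult_distrib[of _ n n]) (use cc in auto)
    moreover have "(c \<cdot>\<^sub>m (Q * mat_diag n a)) * Q\<^sup>T = c \<cdot>\<^sub>m (Q * mat_diag n a * Q\<^sup>T)"
      by (rule mult_smult_assoc_mat[of _ n n]) (use cc in auto)
    ultimately show ?thesis by simp
  qed
  ultimately show ?thesis unfolding sp_def by simp
qed

lemma sp_minus: "orth_mat n Q \<Longrightarrow> sp n Q a - sp n Q b = sp n Q (\<lambda>i. a i - b i)"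
proof -
  assume o: "orth_mat n Q"
  have "sp n Q a - sp n Q b = sp n Q a + (-1) \<cdot>\<^sub>m sp n Q b"
    using o by (intro eq_matI) auto
  thus ?thesis using o by (simp add: sp_smult sp_add)
qed

lemma sp_one: "orth_mat n Q \<Longrightarrow> sp n Q (\<lambda>_. 1) = 1\<^sub>m n"
  unfolding sp_def using orthD[of n Q] by simp

lemma mtrace_sp: "orth_mat n Q \<Longrightarrow> mtrace (sp n Q a) = (\<Sum>i<n. a i)"
proof -
  assume o: "orth_mat n Q"
  note c = orthD[OF o]
  have "mtrace (sp n Q a) = mtrace (Q * (mat_diag n a * Q\<^sup>T))" unfolding sp_def using c by (simp add: assoc_mult_mat[of _ n n _ n _ n])
  also have "\<dots> = mtrace ((mat_diag n a * Q\<^sup>T) * Q)" by (rule mtrace_comm[of _ n n]) (use c in auto)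
  also have "\<dots> = mtrace (mat_diag n a)" using c o by (simp add: assoc_mult_mat[of _ n n _ n _ n])
  finally show ?thesis by (simp add: mtrace_diag)
qed

lemma mtrace_mult_sp:
  assumes o: "orth_mat n Q" and M: "M \<in> carrier_mat n n"
  shows "mtrace (M * sp n Q a) = (\<Sum>i<n. a i * (col Q i \<bullet> (M *\<^sub>v col Q i)))"
proof -
  note c = orthD[OF o]
  have "mtrace (M * sp n Q a) = mtrace (M * Q * (mat_diag n a * Q\<^sup>T))" unfolding sp_def using c M
    by (simp add: assoc_mult_mat[of _ n n _ n _ n])
  also have "\<dots> = mtrace ((mat_diag n a * Q\<^sup>T) * (M * Q))" by (rule mtrace_comm[of _ n n]) (use c M in auto)
  also have "\<dots> = mtrace (mat_diag n a * (Q\<^sup>T * M * Q))" using c M by (simp add: assoc_mult_mat[of _ n n _ n _ n])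
  also have "\<dots> = (\<Sum>i<n. a i * (Q\<^sup>T * M * Q) $$ (i,i))"
    unfolding mtrace_def using c M by (simp add: mat_diag_mult_left[of _ n n])
  also have "\<dots> = (\<Sum>i<n. a i * (col Q i \<bullet> (M *\<^sub>v col Q i)))"
  proof (intro sum.cong refl)
    fix i assume "i \<in> {..<n}"
    hence i: "i < n" by auto
    have "(Q\<^sup>T * M * Q) $$ (i,i) = (Q\<^sup>T * (M * Q)) $$ (i,i)" using c M by (simp add: assoc_mult_mat[of _ n n _ n _ n])
    also have "\<dots> = col Q i \<bullet> col (M * Q) i" using i c M by simp
    also have "col (M * Q) i = M *\<^sub>v col Q i" using i c M by (intro eq_vecI) auto
    finally show "a i * (Q\<^sup>T * M * Q) $$ (i,i) = a i * (col Q i \<bullet> (M *\<^sub>v col Q i))" by simp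
  qed
  finally show ?thesis .
qed

lemma sp_index:
  assumes o: "orth_mat n Q" and k: "k < n" and l: "l < n"
  shows "sp n Q a $$ (k,l) = (\<Sum>i<n. Q $$ (k,i) * a i * Q $$ (l,i))"
proof -
  note c = orthD[OF o]
  have QD: "Q * mat_diag n a = mat n n (\<lambda>(i,j). Q $$ (i,j) * a j)"
    by (rule mat_diag_mult_right) (use c in auto)
  have "sp n Q a $$ (k,l) = row (Q * mat_diag n a) k \<bullet> col Q\<^sup>T l" unfolding sp_def using c k l by simp
  also have "\<dots> = (\<Sum>i<n. Q $$ (k,i) * a i * Q $$ (l,i))"
    unfolding QD using c k l by (auto simp: scalar_prod_def lessThan_atLeast0 intro!: sum.cong)
  finally show ?thesis .
qed

lemma quad_expand:
  assumes M: "M \<in> carrier_mat n n" and v: "v \<in> carrier_vec n"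
  shows "v \<bullet> (M *\<^sub>v v) = (\<Sum>k<n. \<Sum>l<n. v $ k * M $$ (k,l) * v $ l)"
  using M v by (auto simp: scalar_prod_def lessThan_atLeast0 sum_distrib_left mult.assoc intro!: sum.cong)

lemma col_dot:
  assumes "Q \<in> carrier_mat n n" "v \<in> carrier_vec n" "i < n"
  shows "col Q i \<bullet> v = (\<Sum>k<n. Q $$ (k,i) * v $ k)"
  using assms by (auto simp: scalar_prod_def lessThan_atLeast0 intro!: sum.cong)

lemma quad_sp:
  assumes o: "orth_mat n Q" and v: "v \<in> carrier_vec n"
  shows "v \<bullet> (sp n Q a *\<^sub>v v) = (\<Sum>i<n. a i * (col Q i \<bullet> v)^2)"
proof -
  note c = orthD[OF o]
  have "v \<bullet> (sp n Q a *\<^sub>v v) = (\<Sum>k<n. \<Sum>l<n. v $ k * (\<Sum>i<n. Q $$ (k,i) * a i * Q $$ (l,i)) * v $ l)"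
    using quad_expand[OF sp_carrier[OF o] v] sp_index[OF o] by simp
  also have "\<dots> = (\<Sum>k<n. \<Sum>l<n. \<Sum>i<n. a i * ((Q $$ (k,i) * v $ k) * (Q $$ (l,i) * v $ l)))"
    by (simp add: sum_distrib_left sum_distrib_right mult_ac)
  also have "\<dots> = (\<Sum>i<n. \<Sum>k<n. \<Sum>l<n. a i * ((Q $$ (k,i) * v $ k) * (Q $$ (l,i) * v $ l)))"
    by (subst sum.swap, subst (2) sum.swap, simp)
  also have "\<dots> = (\<Sum>i<n. a i * (\<Sum>k<n. Q $$ (k,i) * v $ k)^2)"
    by (simp add: power2_eq_square sum_distrib_left sum_distrib_right mult_ac)
  also have "\<dots> = (\<Sum>i<n. a i * (col Q i \<bullet> v)^2)"
    using col_dot[OF c(1) v] by simp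
  finally show ?thesis .
qed

lemma col_orth:
  assumes o: "orth_mat n Q" and i: "i < n" and j: "j < n"
  shows "col Q i \<bullet> col Q j = (if i = j then 1 else 0)"
proof -
  note c = orthD[OF o]
  have "col Q i \<bullet> col Q j = (Q\<^sup>T * Q) $$ (i,j)" using c(1) i j by simp
  also have "\<dots> = 1\<^sub>m n $$ (i,j)" using c(3) by simp
  finally show ?thesis using i j by simp
qed

lemma parseval:
  assumes o: "orth_mat n Q" and v: "v \<in> carrier_vec n"
  shows "(\<Sum>i<n. (col Q i \<bullet> v)^2) = v \<bullet> v"
  using quad_sp[OF o v, of "\<lambda>_. 1"] sp_one[OF o] v by simp

lemma eig_sp:
  assumes o: "orth_mat n Q" and j: "j < n"
  shows "col Q j \<bullet> (sp n Q a *\<^sub>v col Q j) = a j"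
proof -
  note c = orthD[OF o]
  have cj: "col Q j \<in> carrier_vec n" using c by auto
  have "col Q j \<bullet> (sp n Q a *\<^sub>v col Q j) = (\<Sum>i<n. a i * (col Q i \<bullet> col Q j)^2)" by (rule quad_sp[OF o cj])
  also have "\<dots> = (\<Sum>i<n. if i = j then a j else 0)" using col_orth[OF o _ j] by (intro sum.cong) auto
  finally show ?thesis using j by simp
qed

lemma psd_weight:
  assumes o: "orth_mat n Q" and U: "psd_mat n U" and i: "i < n"
  shows "col Q i \<bullet> (U *\<^sub>v col Q i) \<ge> 0"
  using U orthD[OF o] i unfolding psd_mat_def by auto

lemma weights_sum:
  assumes o: "orth_mat n Q" and U: "U \<in> carrier_mat n n"
  shows "(\<Sum>i<n. col Q i \<bullet> (U *\<^sub>v col Q i)) = mtrace U"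
  using mtrace_mult_sp[OF o U, of "\<lambda>_. 1"] sp_one[OF o] U by simp

lemma trace_sp_lower:
  assumes o: "orth_mat n Q" and U: "psd_mat n U" and tU: "mtrace U = 1" and lo: "\<And>i. i < n \<Longrightarrow> lo \<le> a i"
  shows "lo \<le> mtrace (U * sp n Q a)"
proof -
  have Uc: "U \<in> carrier_mat n n" using U unfolding psd_mat_def by auto
  have "lo = (\<Sum>i<n. lo * (col Q i \<bullet> (U *\<^sub>v col Q i)))"
    using weights_sum[OF o Uc] tU by (simp add: sum_distrib_left[symmetric])
  also have "\<dots> \<le> (\<Sum>i<n. a i * (col Q i \<bullet> (U *\<^sub>v col Q i)))"
    using lo psd_weight[OF o U] by (intro sum_mono mult_right_mono) auto
  finally show ?thesis using mtrace_mult_sp[OF o Uc] by simp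
qed

lemma trace_sp_upper:
  assumes o: "orth_mat n Q" and U: "psd_mat n U" and tU: "mtrace U = 1" and hi: "\<And>i. i < n \<Longrightarrow> a i \<le> hi"
  shows "mtrace (U * sp n Q a) \<le> hi"
proof -
  have Uc: "U \<in> carrier_mat n n" using U unfolding psd_mat_def by auto
  have "(\<Sum>i<n. a i * (col Q i \<bullet> (U *\<^sub>v col Q i))) \<le> (\<Sum>i<n. hi * (col Q i \<bullet> (U *\<^sub>v col Q i)))"
    using hi psd_weight[OF o U] by (intro sum_mono mult_right_mono) auto
  also have "\<dots> = hi"
    using weights_sum[OF o Uc] tU by (simp add: sum_distrib_left[symmetric])
  finally show ?thesis using mtrace_mult_sp[OF o Uc] by simp
qed

lemma C_bounds:
  assumes o: "orth_mat n Q" and i: "i < n" and C0: "psd_mat n C" and C1: "psd_mat n (1\<^sub>m n - C)"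
  shows "0 \<le> col Q i \<bullet> (C *\<^sub>v col Q i)" "col Q i \<bullet> (C *\<^sub>v col Q i) \<le> 1"
proof -
  note c = orthD[OF o]
  have Cc: "C \<in> carrier_mat n n" using C0 unfolding psd_mat_def by auto
  have q: "col Q i \<in> carrier_vec n" using c by auto
  show "0 \<le> col Q i \<bullet> (C *\<^sub>v col Q i)" using C0 q unfolding psd_mat_def by auto
  have "0 \<le> col Q i \<bullet> ((1\<^sub>m n - C) *\<^sub>v col Q i)" using C1 q unfolding psd_mat_def by auto
  also have "(1\<^sub>m n - C) *\<^sub>v col Q i = col Q i - C *\<^sub>v col Q i"
    using Cc q minus_mult_distrib_mat_vec[of "1\<^sub>m n" n n C "col Q i"] by simp
  also have "col Q i \<bullet> (col Q i - C *\<^sub>v col Q i) = col Q i \<bullet> col Q i - col Q i \<bullet> (C *\<^sub>v col Q i)"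
    using Cc q by (intro scalar_prod_minus_distrib[of _ n]) auto
  finally show "col Q i \<bullet> (C *\<^sub>v col Q i) \<le> 1" using col_orth[OF o i i] by simp
qed

lemma pow_carrier[simp]: "A \<in> carrier_mat n n \<Longrightarrow> A ^\<^sub>m l \<in> carrier_mat n n"
  by (induction l) auto

lemma pow_add_mat: assumes A: "(A :: real mat) \<in> carrier_mat n n"
  shows "A ^\<^sub>m a * A ^\<^sub>m b = A ^\<^sub>m (a + b)"
proof (induction b)
  case 0 thus ?case using A by simp
next
  case (Suc b)
  have "A ^\<^sub>m a * A ^\<^sub>m Suc b = (A ^\<^sub>m a * A ^\<^sub>m b) * A"
    using A by (simp add: assoc_mult_mat[of _ n n _ n _ n])
  thus ?case using Suc by simp
qed

definition mderiv :: "nat \<Rightarrow> (real \<Rightarrow> real mat) \<Rightarrow> real mat \<Rightarrow> real \<Rightarrow> bool" where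
  "mderiv n F D x \<longleftrightarrow> (\<forall>i<n. \<forall>j<n. ((\<lambda>s. F s $$ (i,j)) has_real_derivative D $$ (i,j)) (at x))"

lemma mderiv_affine:
  assumes K0: "K0 \<in> carrier_mat n n" and C: "C \<in> carrier_mat n n"
  shows "mderiv n (\<lambda>s. K0 - s \<cdot>\<^sub>m C) ((-1) \<cdot>\<^sub>m C) x"
  unfolding mderiv_def
proof (intro allI impI)
  fix i j assume i: "i < n" and j: "j < n"
  have "((\<lambda>s. K0 $$ (i,j) - s * C $$ (i,j)) has_real_derivative (0 - 1 * C $$ (i,j))) (at x)"
    by (auto intro!: derivative_eq_intros)
  moreover have "(\<lambda>s. (K0 - s \<cdot>\<^sub>m C) $$ (i,j)) = (\<lambda>s. K0 $$ (i,j) - s * C $$ (i,j))"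
    using K0 C i j by auto
  ultimately show "((\<lambda>s. (K0 - s \<cdot>\<^sub>m C) $$ (i, j)) has_real_derivative ((-1) \<cdot>\<^sub>m C) $$ (i, j)) (at x)"
    using C i j by simp
qed

lemma mderiv_const:
  "mderiv n (\<lambda>s. A) (0\<^sub>m n n) x"
  unfolding mderiv_def by auto

lemma mderiv_mult:
  assumes F: "\<And>s. F s \<in> carrier_mat n n" and G: "\<And>s. G s \<in> carrier_mat n n"
    and DF: "DF \<in> carrier_mat n n" and DG: "DG \<in> carrier_mat n n"
    and dF: "mderiv n F DF x" and dG: "mderiv n G DG x"
  shows "mderiv n (\<lambda>s. F s * G s) (DF * G x + F x * DG) x"
  unfolding mderiv_def
proof (intro allI impI)
  fix i j assume i: "i < n" and j: "j < n"
  have eq: "(\<lambda>s. (F s * G s) $$ (i,j)) = (\<lambda>s. \<Sum>k<n. F s $$ (i,k) * G s $$ (k,j))"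
  proof (rule ext)
    fix s
    have "F s \<in> carrier_mat n n" "G s \<in> carrier_mat n n" using F G by auto
    thus "(F s * G s) $$ (i,j) = (\<Sum>k<n. F s $$ (i,k) * G s $$ (k,j))"
      using i j by (auto simp: scalar_prod_def lessThan_atLeast0 intro!: sum.cong)
  qed
  have "((\<lambda>s. \<Sum>k<n. F s $$ (i,k) * G s $$ (k,j)) has_real_derivative
       (\<Sum>k<n. DF $$ (i,k) * G x $$ (k,j) + F x $$ (i,k) * DG $$ (k,j))) (at x)"
  proof (rule DERIV_sum)
    fix k assume "k \<in> {..<n}"
    hence k: "k < n" by auto
    have a: "((\<lambda>s. F s $$ (i,k)) has_real_derivative DF $$ (i,k)) (at x)" using dF i k unfolding mderiv_def by auto
    have b: "((\<lambda>s. G s $$ (k,j)) has_real_derivative DG $$ (k,j)) (at x)" using dG j k unfolding mderiv_def by auto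
    show "((\<lambda>s. F s $$ (i,k) * G s $$ (k,j)) has_real_derivative DF $$ (i,k) * G x $$ (k,j) + F x $$ (i,k) * DG $$ (k,j)) (at x)"
      using DERIV_mult[OF a b] by (simp add: mult.commute)
  qed
  moreover have "(DF * G x + F x * DG) $$ (i,j) = (\<Sum>k<n. DF $$ (i,k) * G x $$ (k,j) + F x $$ (i,k) * DG $$ (k,j))"
  proof -
    have "F x \<in> carrier_mat n n" "G x \<in> carrier_mat n n" using F G by auto
    thus ?thesis using DF DG i j by (auto simp: scalar_prod_def lessThan_atLeast0 sum.distrib intro!: sum.cong)
  qed
  ultimately show "((\<lambda>s. (F s * G s) $$ (i, j)) has_real_derivative (DF * G x + F x * DG) $$ (i, j)) (at x)"
    unfolding eq by simp
qed

fun Dp :: "nat \<Rightarrow> real mat \<Rightarrow> real mat \<Rightarrow> nat \<Rightarrow> real mat" where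
  "Dp n A DA 0 = 0\<^sub>m n n"
| "Dp n A DA (Suc l) = Dp n A DA l * A + A ^\<^sub>m l * DA"

lemma Dp_carrier: "A \<in> carrier_mat n n \<Longrightarrow> DA \<in> carrier_mat n n \<Longrightarrow> Dp n A DA l \<in> carrier_mat n n"
  by (induction l) auto

lemma mderiv_pow:
  assumes F: "\<And>s. F s \<in> carrier_mat n n" and DF: "DF \<in> carrier_mat n n" and dF: "mderiv n F DF x"
  shows "mderiv n (\<lambda>s. F s ^\<^sub>m l) (Dp n (F x) DF l) x"
proof (induction l)
  case 0
  have "(\<lambda>s. F s ^\<^sub>m 0) = (\<lambda>s. 1\<^sub>m n)" using F[THEN carrier_matD(1)] by auto
  thus ?case using mderiv_const[of n "1\<^sub>m n" x] by simp
next
  case (Suc l)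
  have "mderiv n (\<lambda>s. F s ^\<^sub>m l * F s) (Dp n (F x) DF l * F x + F x ^\<^sub>m l * DF) x"
    by (rule mderiv_mult[OF _ F Dp_carrier[OF F DF] DF Suc dF]) (use F in simp)
  thus ?case by simp
qed

lemma deriv_trace:
  assumes A: "A \<in> carrier_mat n n" and F: "\<And>s. F s \<in> carrier_mat n n" and D: "D \<in> carrier_mat n n"
    and dF: "mderiv n F D x"
  shows "((\<lambda>s. mtrace (A * F s)) has_real_derivative mtrace (A * D)) (at x)"
proof -
  have eq: "(\<lambda>s. mtrace (A * F s)) = (\<lambda>s. \<Sum>i<n. \<Sum>k<n. A $$ (i,k) * F s $$ (k,i))"
  proof (rule ext)
    fix s
    have "F s \<in> carrier_mat n n" using F by auto
    thus "mtrace (A * F s) = (\<Sum>i<n. \<Sum>k<n. A $$ (i,k) * F s $$ (k,i))"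
      using A unfolding mtrace_def by (auto simp: scalar_prod_def lessThan_atLeast0 intro!: sum.cong)
  qed
  have "((\<lambda>s. \<Sum>i<n. \<Sum>k<n. A $$ (i,k) * F s $$ (k,i)) has_real_derivative
      (\<Sum>i<n. \<Sum>k<n. A $$ (i,k) * D $$ (k,i))) (at x)"
    using dF unfolding mderiv_def by (intro DERIV_sum DERIV_cmult) auto
  moreover have "mtrace (A * D) = (\<Sum>i<n. \<Sum>k<n. A $$ (i,k) * D $$ (k,i))"
    using A D unfolding mtrace_def by (auto simp: scalar_prod_def lessThan_atLeast0 intro!: sum.cong)
  ultimately show ?thesis unfolding eq by simp
qed

lemma mtrace_mult_add: "A \<in> carrier_mat n n \<Longrightarrow> B \<in> carrier_mat n n \<Longrightarrow> C \<in> carrier_mat n n \<Longrightarrow>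
  mtrace (A * (B + C)) = mtrace (A * B) + mtrace (A * C)"
  by (simp add: mult_add_distrib_mat[of _ n n _ n] mtrace_add[of _ n])

lemma Dp_trace:
  assumes K: "K \<in> carrier_mat n n" and C: "C \<in> carrier_mat n n" and A: "A \<in> carrier_mat n n"
  shows "mtrace (A * Dp n K ((-1) \<cdot>\<^sub>m C) l) = - (\<Sum>j<l. mtrace (A * K ^\<^sub>m j * C * K ^\<^sub>m (l - 1 - j)))"
  using A
proof (induction l arbitrary: A)
  case 0 thus ?case using C K by (simp add: mtrace_def)
next
  case (Suc l A)
  have Dc: "Dp n K ((-1) \<cdot>\<^sub>m C) l \<in> carrier_mat n n" using Dp_carrier K C by auto
  have "mtrace (A * Dp n K ((-1) \<cdot>\<^sub>m C) (Suc l)) =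
        mtrace (A * (Dp n K ((-1) \<cdot>\<^sub>m C) l * K)) + mtrace (A * (K ^\<^sub>m l * ((-1) \<cdot>\<^sub>m C)))"
    using Suc.prems K C Dc by (simp add: mtrace_mult_add[of _ n])
  also have "mtrace (A * (Dp n K ((-1) \<cdot>\<^sub>m C) l * K)) = mtrace ((K * A) * Dp n K ((-1) \<cdot>\<^sub>m C) l)"
  proof -
    have "mtrace (A * (Dp n K ((-1) \<cdot>\<^sub>m C) l * K)) = mtrace ((A * Dp n K ((-1) \<cdot>\<^sub>m C) l) * K)"
      using Suc.prems K Dc by (simp add: assoc_mult_mat[of _ n n _ n _ n])
    also have "\<dots> = mtrace (K * (A * Dp n K ((-1) \<cdot>\<^sub>m C) l))"
      by (rule mtrace_comm[of _ n n]) (use Suc.prems K Dc in auto)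
    finally show ?thesis using Suc.prems K Dc by (simp add: assoc_mult_mat[of _ n n _ n _ n])
  qed
  also have "\<dots> = - (\<Sum>j<l. mtrace (K * A * K ^\<^sub>m j * C * K ^\<^sub>m (l - 1 - j)))"
    using Suc.IH[of "K * A"] Suc.prems K by simp
  also have "(\<Sum>j<l. mtrace (K * A * K ^\<^sub>m j * C * K ^\<^sub>m (l - 1 - j))) =
             (\<Sum>j<l. mtrace (A * K ^\<^sub>m j * C * K ^\<^sub>m (Suc l - 1 - j)))"
  proof (intro sum.cong refl)
    fix j assume "j \<in> {..<l}"
    hence j: "j < l" by auto
    have "mtrace (K * A * K ^\<^sub>m j * C * K ^\<^sub>m (l - 1 - j)) = mtrace (K * (A * K ^\<^sub>m j * C * K ^\<^sub>m (l - 1 - j)))"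
      using Suc.prems K C by (simp add: assoc_mult_mat[of _ n n _ n _ n])
    also have "\<dots> = mtrace ((A * K ^\<^sub>m j * C * K ^\<^sub>m (l - 1 - j)) * K)"
      by (rule mtrace_comm[of _ n n]) (use Suc.prems K C in auto)
    also have "(A * K ^\<^sub>m j * C * K ^\<^sub>m (l - 1 - j)) * K = A * K ^\<^sub>m j * C * (K ^\<^sub>m (l - 1 - j) * K)"
      using Suc.prems K C by (simp add: assoc_mult_mat[of _ n n _ n _ n])
    also have "K ^\<^sub>m (l - 1 - j) * K = K ^\<^sub>m (Suc l - 1 - j)"
      using j by (metis pow_mat.simps(2) Suc_diff_Suc diff_Suc_1 Suc_diff_le less_imp_le_nat diff_Suc_eq_diff_pred)
    finally show "mtrace (K * A * K ^\<^sub>m j * C * K ^\<^sub>m (l - 1 - j)) = mtrace (A * K ^\<^sub>m j * C * K ^\<^sub>m (Suc l - 1 - j))" .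
  qed
  also have "mtrace (A * (K ^\<^sub>m l * ((-1) \<cdot>\<^sub>m C))) = - mtrace (A * K ^\<^sub>m l * C * K ^\<^sub>m (Suc l - 1 - l))"
  proof -
    have "A * (K ^\<^sub>m l * ((-1) \<cdot>\<^sub>m C)) = (-1) \<cdot>\<^sub>m (A * K ^\<^sub>m l * C)"
      using Suc.prems K C mult_smult_distrib[of A n n "K ^\<^sub>m l * C" n "-1"]
      by (simp add: mult_smult_distrib[of _ n n] assoc_mult_mat[of _ n n _ n _ n])
    moreover have "A * K ^\<^sub>m l * C * K ^\<^sub>m (Suc l - 1 - l) = A * K ^\<^sub>m l * C" using Suc.prems K C by simp
    ultimately show ?thesis using Suc.prems K C by (simp add: mtrace_smult[of _ n])
  qed
  finally show ?case by (simp add: lessThan_Suc)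
qed

lemma sp_pow: "orth_mat n Q \<Longrightarrow> (sp n Q a) ^\<^sub>m l = sp n Q (\<lambda>i. a i ^ l)"
proof (induction l)
  case 0 thus ?case using sp_one[OF 0] by simp
next
  case (Suc l)
  have "sp n Q a ^\<^sub>m Suc l = sp n Q (\<lambda>i. a i ^ l) * sp n Q a" using Suc by simp
  also have "\<dots> = sp n Q (\<lambda>i. a i ^ Suc l)" using sp_mult[OF Suc.prems] by (simp add: mult.commute)
  finally show ?case .
qed

lemma sym_dot:
  fixes C :: "real mat"
  assumes C: "C \<in> carrier_mat n n" and s: "C\<^sup>T = C" and x: "x \<in> carrier_vec n" and y: "y \<in> carrier_vec n"
  shows "(C *\<^sub>v x) \<bullet> y = x \<bullet> (C *\<^sub>v y)"
  using transpose_vec_mult_scalar[of C n n y x] C x y s by simp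

lemma Csq:
  assumes C: "C \<in> carrier_mat n n" and s: "C\<^sup>T = C" and C0: "psd_mat n C" and C1: "psd_mat n (1\<^sub>m n - C)"
    and r: "r \<in> carrier_vec n" and rr: "r \<bullet> r = 1"
  shows "(C *\<^sub>v r) \<bullet> (C *\<^sub>v r) \<le> 1"
proof -
  obtain S g where oS: "orth_mat n S" and CS: "C = S * mat_diag n g * S\<^sup>T" using spectral[OF C s] by auto
  have CS': "C = sp n S g" using CS unfolding sp_def .
  have g: "0 \<le> g i \<and> g i \<le> 1" if "i < n" for i
    using C_bounds[OF oS that C0 C1] eig_sp[OF oS that, of g] CS' by simp
  have "(C *\<^sub>v r) \<bullet> (C *\<^sub>v r) = r \<bullet> (C *\<^sub>v (C *\<^sub>v r))" using sym_dot[OF C s r] C r by simp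
  also have "C *\<^sub>v (C *\<^sub>v r) = (C * C) *\<^sub>v r" using C r by simp
  also have "C * C = sp n S (\<lambda>i. g i * g i)" unfolding CS' using sp_mult[OF oS] by simp
  also have "r \<bullet> (sp n S (\<lambda>i. g i * g i) *\<^sub>v r) = (\<Sum>i<n. g i * g i * (col S i \<bullet> r)^2)" by (rule quad_sp[OF oS r])
  also have "\<dots> \<le> (\<Sum>i<n. (col S i \<bullet> r)^2)"
  proof (rule sum_mono)
    fix i assume "i \<in> {..<n}"
    hence "0 \<le> g i" "g i \<le> 1" using g by auto
    hence "g i * g i \<le> 1" by (simp add: mult_le_one)
    thus "g i * g i * (col S i \<bullet> r)^2 \<le> (col S i \<bullet> r)^2" using mult_right_mono[of "g i * g i" 1 "(col S i \<bullet> r)^2"] by simp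
  qed
  also have "\<dots> = 1" using parseval[OF oS r] rr by simp
  finally show ?thesis .
qed

lemma pair_ineq:
  fixes x y :: real assumes x: "x \<ge> 0" and y: "y \<ge> 0" and j: "j \<le> l"
  shows "x^(l-j) * y^j + x^j * y^(l-j) \<le> x^l + y^l"
proof -
  have "0 \<le> (x^j - y^j) * (x^(l-j) - y^(l-j))"
  proof (cases "x \<le> y")
    case True
    hence "x^j \<le> y^j" "x^(l-j) \<le> y^(l-j)" using x by (auto intro: power_mono)
    thus ?thesis by (simp add: mult_nonpos_nonpos)
  next
    case False
    hence "y^j \<le> x^j" "y^(l-j) \<le> x^(l-j)" using y by (auto intro: power_mono)
    thus ?thesis by simp
  qed
  moreover have "x^l = x^j * x^(l-j)" "y^l = y^j * y^(l-j)" using j by (simp_all add: power_add[symmetric])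
  ultimately show ?thesis by (simp add: algebra_simps)
qed

lemma amgm:
  fixes x y :: real assumes x: "x \<ge> 0" and y: "y \<ge> 0"
  shows "(\<Sum>j<Suc l. x^(l-j) * y^j) \<le> real (Suc l) * (x^l + y^l) / 2"
proof -
  have e: "{..<Suc l} = {0..l}" by auto
  have "(\<Sum>j=0..l. x^(l-j) * y^j) = (\<Sum>j=0..l. x^(l-(l+0-j)) * y^(l+0-j))"
    by (rule sum.atLeastAtMost_rev)
  also have "\<dots> = (\<Sum>j=0..l. x^j * y^(l-j))" by (intro sum.cong) auto
  finally have r: "(\<Sum>j=0..l. x^(l-j) * y^j) = (\<Sum>j=0..l. x^j * y^(l-j))" .
  have "2 * (\<Sum>j=0..l. x^(l-j) * y^j) = (\<Sum>j=0..l. x^(l-j) * y^j + x^j * y^(l-j))"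
    using r by (simp add: sum.distrib)
  also have "\<dots> \<le> (\<Sum>j=0..l. x^l + y^l)" using pair_ineq[OF x y] by (intro sum_mono) auto
  also have "\<dots> = real (Suc l) * (x^l + y^l)" by simp
  finally show ?thesis unfolding e by simp
qed

lemma taylor2:
  fixes f f1 f2 :: "real \<Rightarrow> real"
  assumes eta: "\<eta> \<ge> 0"
    and d1: "\<And>s. (f has_real_derivative f1 s) (at s)"
    and d2: "\<And>s. (f1 has_real_derivative f2 s) (at s)"
    and b: "\<And>s. 0 \<le> s \<Longrightarrow> s \<le> \<eta> \<Longrightarrow> f2 s \<le> M"
  shows "f \<eta> \<le> f 0 + \<eta> * f1 0 + \<eta>^2 / 2 * M"
proof -
  define g where "g s = f1 s - f1 0 - s * M" for s
  have dg: "(g has_real_derivative (f2 s - M)) (at s)" for s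
    unfolding g_def by (auto intro!: derivative_eq_intros d2)
  have gle: "g x \<le> 0" if "0 \<le> x" "x \<le> \<eta>" for x
  proof -
    have "g x \<le> g 0"
      by (rule DERIV_nonpos_imp_nonincreasing[OF that(1)]) (use dg b that in force)
    thus ?thesis unfolding g_def by simp
  qed
  define h where "h s = f s - f 0 - s * f1 0 - s^2 / 2 * M" for s
  have dh: "(h has_real_derivative g s) (at s)" for s
    unfolding h_def g_def by (auto intro!: derivative_eq_intros d1 simp: power2_eq_square algebra_simps)
  have "h \<eta> \<le> h 0"
    by (rule DERIV_nonpos_imp_nonincreasing[OF eta]) (use dh gle in force)
  thus ?thesis unfolding h_def by simp
qed

locale tay =
  fixes n :: nat and K0 C :: "real mat" and \<eta> :: real
  assumes K0: "K0 \<in> carrier_mat n n" and C: "C \<in> carrier_mat n n"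
    and symK0: "K0\<^sup>T = K0" and symC: "C\<^sup>T = C"
    and C0: "psd_mat n C" and C1: "psd_mat n (1\<^sub>m n - C)" and eta: "\<eta> \<ge> 0"
    and Kpsd: "\<And>s. 0 \<le> s \<Longrightarrow> s \<le> \<eta> \<Longrightarrow> psd_mat n (K0 - s \<cdot>\<^sub>m C)"
begin

definition K where "K s = K0 - s \<cdot>\<^sub>m C"
definition p where "p l s = mtrace (K s ^\<^sub>m l)"
definition q where "q l s = mtrace (C * K s ^\<^sub>m l)"

lemma Kc[simp]: "K s \<in> carrier_mat n n" unfolding K_def using K0 C by auto

lemma symK: "(K s)\<^sup>T = K s"
proof -
  have "(K0 - s \<cdot>\<^sub>m C)\<^sup>T = K0\<^sup>T - (s \<cdot>\<^sub>m C)\<^sup>T" by (rule transpose_minus) (use K0 C in auto)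
  moreover have "(s \<cdot>\<^sub>m C)\<^sup>T = s \<cdot>\<^sub>m C\<^sup>T" by (rule eq_matI) auto
  ultimately show ?thesis unfolding K_def using symK0 symC by simp
qed

lemma dK: "mderiv n K ((-1) \<cdot>\<^sub>m C) x"
  unfolding K_def[abs_def] by (rule mderiv_affine[OF K0 C])

lemma Cm: "(-1) \<cdot>\<^sub>m C \<in> carrier_mat n n" using C by simp

lemma trace_pow_term:
  assumes j: "j < l"
  shows "mtrace (1\<^sub>m n * K s ^\<^sub>m j * C * K s ^\<^sub>m (l - 1 - j)) = mtrace (C * K s ^\<^sub>m (l - 1))"
proof -
  have "mtrace (1\<^sub>m n * K s ^\<^sub>m j * C * K s ^\<^sub>m (l - 1 - j)) = mtrace (K s ^\<^sub>m j * (C * K s ^\<^sub>m (l - 1 - j)))"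
    using C by (simp add: assoc_mult_mat[of _ n n _ n _ n] left_mult_one_mat[of _ n n])
  also have "\<dots> = mtrace ((C * K s ^\<^sub>m (l - 1 - j)) * K s ^\<^sub>m j)"
    by (rule mtrace_comm[of _ n n]) (use C in auto)
  also have "\<dots> = mtrace (C * (K s ^\<^sub>m (l - 1 - j) * K s ^\<^sub>m j))"
    using C by (simp add: assoc_mult_mat[of _ n n _ n _ n])
  also have "K s ^\<^sub>m (l - 1 - j) * K s ^\<^sub>m j = K s ^\<^sub>m (l - 1)"
    using pow_add_mat[OF Kc] j by simp
  finally show ?thesis .
qed

lemma p_deriv: "((\<lambda>s. p l s) has_real_derivative (- (real l * q (l - 1) s))) (at s)"
proof -
  have d: "((\<lambda>s. mtrace (1\<^sub>m n * K s ^\<^sub>m l)) has_real_derivative mtrace (1\<^sub>m n * Dp n (K s) ((-1) \<cdot>\<^sub>m C) l)) (at s)"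
    by (rule deriv_trace[OF one_carrier_mat _ Dp_carrier[OF Kc Cm] mderiv_pow[OF _ Cm dK]]) auto
  have e1: "(\<lambda>s. mtrace (1\<^sub>m n * K s ^\<^sub>m l)) = (\<lambda>s. p l s)" unfolding p_def
    by (intro ext) (simp add: left_mult_one_mat[of _ n n])
  have "mtrace (1\<^sub>m n * Dp n (K s) ((-1) \<cdot>\<^sub>m C) l) = - (\<Sum>j<l. mtrace (1\<^sub>m n * K s ^\<^sub>m j * C * K s ^\<^sub>m (l - 1 - j)))"
    by (rule Dp_trace[OF Kc C one_carrier_mat])
  also have "\<dots> = - (\<Sum>j<l. mtrace (C * K s ^\<^sub>m (l - 1)))" using trace_pow_term by simp
  also have "\<dots> = - (real l * q (l - 1) s)" unfolding q_def by simp
  finally show ?thesis using d e1 by simp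
qed

lemma q_deriv: "((\<lambda>s. q l s) has_real_derivative (- (\<Sum>j<l. mtrace (C * K s ^\<^sub>m j * C * K s ^\<^sub>m (l - 1 - j))))) (at s)"
proof -
  have d: "((\<lambda>s. mtrace (C * K s ^\<^sub>m l)) has_real_derivative mtrace (C * Dp n (K s) ((-1) \<cdot>\<^sub>m C) l)) (at s)"
    by (rule deriv_trace[OF C _ Dp_carrier[OF Kc Cm] mderiv_pow[OF _ Cm dK]]) auto
  have "mtrace (C * Dp n (K s) ((-1) \<cdot>\<^sub>m C) l) = - (\<Sum>j<l. mtrace (C * K s ^\<^sub>m j * C * K s ^\<^sub>m (l - 1 - j)))"
    by (rule Dp_trace[OF Kc C C])
  thus ?thesis using d unfolding q_def by simp
qed

lemma eigK:
  assumes "0 \<le> s" "s \<le> \<eta>"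
  shows "\<exists>R k. orth_mat n R \<and> K s = sp n R k \<and> (\<forall>i<n. 0 \<le> k i)"
proof -
  obtain R k where oR: "orth_mat n R" and e: "K s = R * mat_diag n k * R\<^sup>T" using spectral[OF Kc symK] by blast
  have e': "K s = sp n R k" using e unfolding sp_def .
  have "0 \<le> k i" if i: "i < n" for i
  proof -
    have "0 \<le> col R i \<bullet> (K s *\<^sub>v col R i)" using Kpsd[OF assms] orthD[OF oR] i unfolding psd_mat_def K_def by auto
    thus ?thesis using eig_sp[OF oR i, of k] e' by simp
  qed
  thus ?thesis using oR e' by blast
qed

lemma p_sp: "orth_mat n R \<Longrightarrow> K s = sp n R k \<Longrightarrow> p l s = (\<Sum>i<n. k i ^ l)"
  unfolding p_def by (simp add: sp_pow mtrace_sp)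

lemma q_nonneg: assumes "0 \<le> s" "s \<le> \<eta>" shows "0 \<le> q l s"
proof -
  obtain R k where oR: "orth_mat n R" and e: "K s = sp n R k" and k: "\<forall>i<n. 0 \<le> k i" using eigK[OF assms] by blast
  have "q l s = (\<Sum>i<n. k i ^ l * (col R i \<bullet> (C *\<^sub>v col R i)))"
    unfolding q_def e sp_pow[OF oR] by (rule mtrace_mult_sp[OF oR C])
  also have "\<dots> \<ge> 0" using k C_bounds(1)[OF oR _ C0 C1] by (intro sum_nonneg mult_nonneg_nonneg) auto
  finally show ?thesis .
qed

lemma p_mono: assumes "0 \<le> s" "s \<le> \<eta>" shows "p l s \<le> p l 0"
proof (rule DERIV_nonpos_imp_nonincreasing[OF assms(1)])
  fix x assume "0 \<le> x" "x \<le> s"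
  hence "0 \<le> q (l - 1) x" using q_nonneg assms by auto
  thus "\<exists>y. ((\<lambda>s. p l s) has_real_derivative y) (at x) \<and> y \<le> 0" using p_deriv by (intro exI conjI) auto
qed

lemma T_formula:
  assumes oR: "orth_mat n R" and e: "K s = sp n R k"
  shows "mtrace (C * K s ^\<^sub>m j * C * K s ^\<^sub>m i) =
    (\<Sum>a<n. k a ^ i * (\<Sum>b<n. k b ^ j * (col R b \<bullet> (C *\<^sub>v col R a))^2))"
proof -
  note c = orthD[OF oR]
  define M where "M = C * sp n R (\<lambda>t. k t ^ j) * C"
  have Mc: "M \<in> carrier_mat n n" unfolding M_def using C oR by simp
  have "mtrace (C * K s ^\<^sub>m j * C * K s ^\<^sub>m i) = mtrace (M * sp n R (\<lambda>t. k t ^ i))"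
    unfolding M_def e sp_pow[OF oR] ..
  also have "\<dots> = (\<Sum>a<n. k a ^ i * (col R a \<bullet> (M *\<^sub>v col R a)))" by (rule mtrace_mult_sp[OF oR Mc])
  also have "\<dots> = (\<Sum>a<n. k a ^ i * (\<Sum>b<n. k b ^ j * (col R b \<bullet> (C *\<^sub>v col R a))^2))"
  proof (intro sum.cong refl arg_cong[where f="\<lambda>x. _ * x"])
    fix a assume "a \<in> {..<n}"
    hence a: "a < n" by auto
    have ra: "col R a \<in> carrier_vec n" using c by auto
    have Cra: "C *\<^sub>v col R a \<in> carrier_vec n" using C ra by auto
    have spc: "sp n R (\<lambda>t. k t ^ j) \<in> carrier_mat n n" using oR by simp
    have "M *\<^sub>v col R a = (C * sp n R (\<lambda>t. k t ^ j)) *\<^sub>v (C *\<^sub>v col R a)"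
      unfolding M_def by (rule assoc_mult_mat_vec) (use C spc ra in auto)
    also have "\<dots> = C *\<^sub>v (sp n R (\<lambda>t. k t ^ j) *\<^sub>v (C *\<^sub>v col R a))"
      by (rule assoc_mult_mat_vec) (use C spc Cra in auto)
    finally have "M *\<^sub>v col R a = C *\<^sub>v (sp n R (\<lambda>t. k t ^ j) *\<^sub>v (C *\<^sub>v col R a))" .
    hence "col R a \<bullet> (M *\<^sub>v col R a) = (C *\<^sub>v col R a) \<bullet> (sp n R (\<lambda>t. k t ^ j) *\<^sub>v (C *\<^sub>v col R a))"
      using sym_dot[OF C symC ra, of "sp n R (\<lambda>t. k t ^ j) *\<^sub>v (C *\<^sub>v col R a)"] Cra spc by simp
    also have "\<dots> = (\<Sum>b<n. k b ^ j * (col R b \<bullet> (C *\<^sub>v col R a))^2)" by (rule quad_sp[OF oR Cra])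
    finally show "col R a \<bullet> (M *\<^sub>v col R a) = (\<Sum>b<n. k b ^ j * (col R b \<bullet> (C *\<^sub>v col R a))^2)" .
  qed
  finally show ?thesis .
qed

lemma T_bound:
  assumes s: "0 \<le> s" "s \<le> \<eta>"
  shows "(\<Sum>j<Suc l. mtrace (C * K s ^\<^sub>m j * C * K s ^\<^sub>m (l - j))) \<le> real (Suc l) * p l s"
proof -
  obtain R k where oR: "orth_mat n R" and e: "K s = sp n R k" and k: "\<forall>i<n. 0 \<le> k i" using eigK[OF s] by blast
  note c = orthD[OF oR]
  define E where "E a b = (col R b \<bullet> (C *\<^sub>v col R a))^2" for a b
  have Esym: "E a b = E b a" if "a < n" "b < n" for a b
    unfolding E_def using sym_dot[OF C symC, of "col R b" "col R a"] c that
      comm_scalar_prod[of "C *\<^sub>v col R b" n "col R a"] C by auto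
  have E0: "E a b \<ge> 0" for a b unfolding E_def by simp
  have Erow: "(\<Sum>b<n. E a b) \<le> 1" if a: "a < n" for a
  proof -
    have ra: "col R a \<in> carrier_vec n" using c a by auto
    have "(\<Sum>b<n. E a b) = (C *\<^sub>v col R a) \<bullet> (C *\<^sub>v col R a)"
      unfolding E_def using parseval[OF oR, of "C *\<^sub>v col R a"] C ra by simp
    also have "\<dots> \<le> 1" using Csq[OF C symC C0 C1 ra] col_orth[OF oR a a] by simp
    finally show ?thesis .
  qed
  have "(\<Sum>j<Suc l. mtrace (C * K s ^\<^sub>m j * C * K s ^\<^sub>m (l - j)))
      = (\<Sum>j<Suc l. \<Sum>a<n. \<Sum>b<n. E a b * (k a ^ (l - j) * k b ^ j))"
    unfolding T_formula[OF oR e] E_def by (simp add: sum_distrib_left mult_ac)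
  also have "\<dots> = (\<Sum>a<n. \<Sum>j<Suc l. \<Sum>b<n. E a b * (k a ^ (l - j) * k b ^ j))"
    by (rule sum.swap)
  also have "\<dots> = (\<Sum>a<n. \<Sum>b<n. \<Sum>j<Suc l. E a b * (k a ^ (l - j) * k b ^ j))"
    by (intro sum.cong refl sum.swap)
  also have "\<dots> = (\<Sum>a<n. \<Sum>b<n. E a b * (\<Sum>j<Suc l. k a ^ (l - j) * k b ^ j))"
    by (simp only: sum_distrib_left)
  also have "\<dots> \<le> (\<Sum>a<n. \<Sum>b<n. E a b * (real (Suc l) * (k a ^ l + k b ^ l) / 2))"
    using k E0 amgm by (intro sum_mono mult_left_mono) auto
  also have "\<dots> = (\<Sum>a<n. \<Sum>b<n. real (Suc l) / 2 * (E a b * k a ^ l) + real (Suc l) / 2 * (E a b * k b ^ l))"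
    by (intro sum.cong refl) (simp add: field_simps)
  also have "\<dots> = real (Suc l) / 2 * ((\<Sum>a<n. \<Sum>b<n. E a b * k a ^ l) + (\<Sum>a<n. \<Sum>b<n. E a b * k b ^ l))"
    by (simp only: sum.distrib sum_distrib_left distrib_left)
  also have "\<dots> = real (Suc l) * (\<Sum>a<n. k a ^ l * (\<Sum>b<n. E a b))"
  proof -
    have s1: "(\<Sum>a<n. \<Sum>b<n. E a b * k b ^ l) = (\<Sum>a<n. \<Sum>b<n. E a b * k a ^ l)"
      by (subst sum.swap) (use Esym in \<open>auto intro!: sum.cong\<close>)
    have s2: "(\<Sum>a<n. \<Sum>b<n. E a b * k a ^ l) = (\<Sum>a<n. k a ^ l * (\<Sum>b<n. E a b))"
      by (simp add: sum_distrib_left mult_ac)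
    show ?thesis unfolding s1 s2 by simp
  qed
  also have "\<dots> \<le> real (Suc l) * (\<Sum>a<n. k a ^ l)"
  proof (intro mult_left_mono sum_mono)
    fix a assume "a \<in> {..<n}"
    hence a: "a < n" by auto
    have "0 \<le> k a ^ l" using k a by auto
    thus "k a ^ l * (\<Sum>b<n. E a b) \<le> k a ^ l" using Erow[OF a] mult_left_mono[of "\<Sum>b<n. E a b" 1 "k a ^ l"] by simp
  qed simp
  also have "\<dots> = real (Suc l) * p l s" using p_sp[OF oR e] by simp
  finally show ?thesis .
qed

lemma step_m:
  "p m \<eta> \<le> p m 0 - \<eta> * (real m * q (m - 1) 0) + \<eta>^2 / 2 * (real m * real (m - 1) * p (m - 2) 0)"
proof -
  define f2 where "f2 s = real m * (\<Sum>j<m - 1. mtrace (C * K s ^\<^sub>m j * C * K s ^\<^sub>m (m - 1 - 1 - j)))" for s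
  have d1: "((\<lambda>s. p m s) has_real_derivative (- (real m * q (m - 1) s))) (at s)" for s by (rule p_deriv)
  have d2: "((\<lambda>s. - (real m * q (m - 1) s)) has_real_derivative f2 s) (at s)" for s
    unfolding f2_def using q_deriv[of "m - 1" s] by (auto intro!: derivative_eq_intros)
  have b: "f2 s \<le> real m * real (m - 1) * p (m - 2) 0" if s: "0 \<le> s" "s \<le> \<eta>" for s
  proof (cases "m \<ge> 2")
    case False
    hence "m - 1 = 0 \<or> m = 0" by auto
    thus ?thesis unfolding f2_def by auto
  next
    case True
    then obtain l where l: "m = Suc (Suc l)" by (metis add_2_eq_Suc le_Suc_ex)
    have "(\<Sum>j<m - 1. mtrace (C * K s ^\<^sub>m j * C * K s ^\<^sub>m (m - 1 - 1 - j))) \<le> real (Suc l) * p l s"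
      using T_bound[OF s, of l] l by simp
    also have "\<dots> \<le> real (Suc l) * p l 0" using p_mono[OF s] by (intro mult_left_mono) auto
    finally show ?thesis unfolding f2_def using l by (auto intro: mult_left_mono)
  qed
  show ?thesis using taylor2[OF eta d1 d2 b] by simp
qed

end

lemma exp_sum_series: "(\<lambda>m. x ^ m / fact m) sums exp (x::real)"
  using exp_converges[of x] by (simp add: divide_inverse mult.commute scaleR_conv_of_real)

lemma E1:
  assumes A: "A \<in> carrier_mat n n" and s: "A\<^sup>T = A"
  shows "(\<lambda>m. mtrace (A ^\<^sub>m m) / fact m) sums mtrace (mat_exp A)"
proof -
  obtain R k where oR: "orth_mat n R" and e: "A = R * mat_diag n k * R\<^sup>T" using spectral[OF A s] by blast
  have e': "A = sp n R k" using e unfolding sp_def .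
  have "(\<lambda>m. \<Sum>i<n. k i ^ m / fact m) sums (\<Sum>i<n. exp (k i))"
    by (rule sums_sum) (rule exp_sum_series)
  moreover have "mtrace (A ^\<^sub>m m) / fact m = (\<Sum>i<n. k i ^ m / fact m)" for m
    unfolding e' sp_pow[OF oR] mtrace_sp[OF oR] by (simp add: sum_divide_distrib)
  moreover have "mtrace (mat_exp A) = (\<Sum>i<n. exp (k i))"
    unfolding e' mat_exp_def mat_fun_sp[OF oR] mtrace_sp[OF oR] ..
  ultimately show ?thesis by simp
qed

lemma E2:
  assumes A: "A \<in> carrier_mat n n" and s: "A\<^sup>T = A" and C: "C \<in> carrier_mat n n"
  shows "(\<lambda>m. mtrace (C * A ^\<^sub>m m) / fact m) sums mtrace (C * mat_exp A)"
proof -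
  obtain R k where oR: "orth_mat n R" and e: "A = R * mat_diag n k * R\<^sup>T" using spectral[OF A s] by blast
  have e': "A = sp n R k" using e unfolding sp_def .
  define w where "w i = col R i \<bullet> (C *\<^sub>v col R i)" for i
  have "(\<lambda>m. \<Sum>i<n. (k i ^ m / fact m) * w i) sums (\<Sum>i<n. exp (k i) * w i)"
    by (rule sums_sum) (rule sums_mult2, rule exp_sum_series)
  moreover have "mtrace (C * A ^\<^sub>m m) / fact m = (\<Sum>i<n. (k i ^ m / fact m) * w i)" for m
    unfolding e' sp_pow[OF oR] mtrace_mult_sp[OF oR C] w_def by (simp add: sum_divide_distrib)
  moreover have "mtrace (C * mat_exp A) = (\<Sum>i<n. exp (k i) * w i)"
    unfolding e' mat_exp_def mat_fun_sp[OF oR] mtrace_mult_sp[OF oR C] w_def ..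
  ultimately show ?thesis by simp
qed

lemma fact_cancel: "real (Suc m) * x / fact (Suc m) = x / (fact m :: real)"
proof -
  have "fact (Suc m) = real (Suc m) * (fact m :: real)" by (simp only: fact_Suc)
  thus ?thesis by (simp only: nonzero_mult_divide_mult_cancel_left[of "real (Suc m)"] of_nat_Suc) simp
qed

context tay begin

lemma K_0: "K 0 = K0" unfolding K_def using K0 C by (intro eq_matI) auto

lemma G':
  "mtrace (mat_exp (K \<eta>)) \<le> mtrace (mat_exp K0) - \<eta> * mtrace (C * mat_exp K0) + \<eta>^2 / 2 * mtrace (mat_exp K0)"
proof -
  have a: "(\<lambda>m. p m \<eta> / fact m) sums mtrace (mat_exp (K \<eta>))"
    unfolding p_def by (rule E1[OF Kc symK])
  have b0: "(\<lambda>m. p m 0 / fact m) sums mtrace (mat_exp K0)"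
    unfolding p_def K_0 by (rule E1[OF K0 symK0])
  have q0: "(\<lambda>m. q m 0 / fact m) sums mtrace (C * mat_exp K0)"
    unfolding q_def K_0 by (rule E2[OF K0 symK0 C])
  have b1: "(\<lambda>m. real m * q (m - 1) 0 / fact m) sums mtrace (C * mat_exp K0)"
  proof -
    have "(\<lambda>m. real (Suc m) * q (Suc m - 1) 0 / fact (Suc m)) = (\<lambda>m. q m 0 / fact m)"
      by (intro ext) (simp only: fact_cancel diff_Suc_1)
    hence "(\<lambda>m. real (Suc m) * q (Suc m - 1) 0 / fact (Suc m)) sums mtrace (C * mat_exp K0)" using q0 by simp
    thus ?thesis using sums_Suc_iff[of "\<lambda>m. real m * q (m - 1) 0 / fact m"] by simp
  qed
  have b2: "(\<lambda>m. real m * real (m - 1) * p (m - 2) 0 / fact m) sums mtrace (mat_exp K0)"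
  proof -
    have "(\<lambda>m. real (Suc (Suc m)) * real (Suc (Suc m) - 1) * p (Suc (Suc m) - 2) 0 / fact (Suc (Suc m))) = (\<lambda>m. p m 0 / fact m)"
    proof (intro ext)
      fix m
      have "real (Suc (Suc m)) * real (Suc (Suc m) - 1) * p (Suc (Suc m) - 2) 0 / fact (Suc (Suc m))
          = real (Suc (Suc m)) * (real (Suc m) * p m 0) / fact (Suc (Suc m))" by simp
      also have "\<dots> = real (Suc m) * p m 0 / fact (Suc m)" by (rule fact_cancel)
      also have "\<dots> = p m 0 / fact m" by (rule fact_cancel)
      finally show "real (Suc (Suc m)) * real (Suc (Suc m) - 1) * p (Suc (Suc m) - 2) 0 / fact (Suc (Suc m)) = p m 0 / fact m" .
    qed
    hence "(\<lambda>m. real (Suc (Suc m)) * real (Suc (Suc m) - 1) * p (Suc (Suc m) - 2) 0 / fact (Suc (Suc m))) sums mtrace (mat_exp K0)"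
      using b0 by simp
    hence "(\<lambda>m. real (Suc m) * real (Suc m - 1) * p (Suc m - 2) 0 / fact (Suc m)) sums mtrace (mat_exp K0)"
      using sums_Suc_iff[of "\<lambda>m. real (Suc m) * real (Suc m - 1) * p (Suc m - 2) 0 / fact (Suc m)"] by simp
    thus ?thesis using sums_Suc_iff[of "\<lambda>m. real m * real (m - 1) * p (m - 2) 0 / fact m"] by simp
  qed
  have b: "(\<lambda>m. p m 0 / fact m - \<eta> * (real m * q (m - 1) 0 / fact m) + \<eta>^2 / 2 * (real m * real (m - 1) * p (m - 2) 0 / fact m))
      sums (mtrace (mat_exp K0) - \<eta> * mtrace (C * mat_exp K0) + \<eta>^2 / 2 * mtrace (mat_exp K0))"
    by (intro sums_add sums_diff sums_mult b0 b1 b2)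
  show ?thesis
  proof (rule sums_le[OF _ a b])
    fix m
    have "p m \<eta> / fact m \<le> (p m 0 - \<eta> * (real m * q (m - 1) 0) + \<eta>^2 / 2 * (real m * real (m - 1) * p (m - 2) 0)) / fact m"
      using step_m[of m] by (intro divide_right_mono) auto
    also have "(p m 0 - \<eta> * (real m * q (m - 1) 0) + \<eta>^2 / 2 * (real m * real (m - 1) * p (m - 2) 0)) / fact m
       = p m 0 / fact m - \<eta> * (real m * q (m - 1) 0 / fact m) + \<eta>^2 / 2 * (real m * real (m - 1) * p (m - 2) 0 / fact m)"
      by (simp only: diff_divide_distrib add_divide_distrib times_divide_eq_right)
    finally show "p m \<eta> / fact m \<le> p m 0 / fact m - \<eta> * (real m * q (m - 1) 0 / fact m) + \<eta>^2 / 2 * (real m * real (m - 1) * p (m - 2) 0 / fact m)" .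
  qed
qed

end

lemma sp_cong: "(\<And>i. i < n \<Longrightarrow> f i = g i) \<Longrightarrow> sp n Q f = sp n Q g"
proof -
  assume "\<And>i. i < n \<Longrightarrow> f i = g i"
  hence "mat_diag n f = mat_diag n g" by (intro eq_matI) (auto simp: mat_diag_def)
  thus ?thesis unfolding sp_def by simp
qed

lemma quad_minus_smult:
  fixes K0 C :: "real mat"
  assumes K0: "K0 \<in> carrier_mat n n" and C: "C \<in> carrier_mat n n" and v: "v \<in> carrier_vec n"
  shows "v \<bullet> ((K0 - s \<cdot>\<^sub>m C) *\<^sub>v v) = v \<bullet> (K0 *\<^sub>v v) - s * (v \<bullet> (C *\<^sub>v v))"
proof -
  have "v \<bullet> ((K0 - s \<cdot>\<^sub>m C) *\<^sub>v v) = (\<Sum>k<n. \<Sum>l<n. v $ k * (K0 - s \<cdot>\<^sub>m C) $$ (k,l) * v $ l)"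
    by (rule quad_expand) (use K0 C v in auto)
  also have "\<dots> = (\<Sum>k<n. \<Sum>l<n. v $ k * K0 $$ (k,l) * v $ l - s * (v $ k * C $$ (k,l) * v $ l))"
    using K0 C by (intro sum.cong refl) (auto simp: algebra_simps)
  also have "\<dots> = (\<Sum>k<n. \<Sum>l<n. v $ k * K0 $$ (k,l) * v $ l) - s * (\<Sum>k<n. \<Sum>l<n. v $ k * C $$ (k,l) * v $ l)"
    by (simp add: sum_subtractf sum_distrib_left)
  also have "\<dots> = v \<bullet> (K0 *\<^sub>v v) - s * (v \<bullet> (C *\<^sub>v v))"
    using quad_expand[OF K0 v] quad_expand[OF C v] by simp
  finally show ?thesis .
qed

lemma quad_le_norm:
  fixes C :: "real mat"
  assumes C: "C \<in> carrier_mat n n" and C1: "psd_mat n (1\<^sub>m n - C)" and v: "v \<in> carrier_vec n"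
  shows "v \<bullet> (C *\<^sub>v v) \<le> v \<bullet> v"
proof -
  have "0 \<le> v \<bullet> ((1\<^sub>m n - C) *\<^sub>v v)" using C1 v unfolding psd_mat_def by auto
  also have "(1\<^sub>m n - C) *\<^sub>v v = v - C *\<^sub>v v"
    using C v minus_mult_distrib_mat_vec[of "1\<^sub>m n" n n C v] by simp
  also have "v \<bullet> (v - C *\<^sub>v v) = v \<bullet> v - v \<bullet> (C *\<^sub>v v)"
    using C v by (intro scalar_prod_minus_distrib[of _ n]) auto
  finally show ?thesis by simp
qed

lemma vv_nonneg: "(v :: real vec) \<bullet> v \<ge> 0"
  by (simp add: scalar_prod_def sum_nonneg)

lemma coreG:
  fixes C :: "real mat" and \<eta> :: real
  assumes oQ: "orth_mat n Q" and mu: "\<And>i. i < n \<Longrightarrow> 0 < mu i"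
    and C: "C \<in> carrier_mat n n" and symC: "C\<^sup>T = C"
    and C0: "psd_mat n C" and C1: "psd_mat n (1\<^sub>m n - C)" and eta: "\<eta> \<ge> 0"
  shows "mtrace (mat_exp (mat_ln (sp n Q mu) - \<eta> \<cdot>\<^sub>m C))
      \<le> (\<Sum>i<n. mu i) - \<eta> * mtrace (C * sp n Q mu) + \<eta>^2 / 2 * (\<Sum>i<n. mu i)"
proof -
  note c = orthD[OF oQ]
  define L where "L = sp n Q (\<lambda>i. ln (mu i))"
  have lnY: "mat_ln (sp n Q mu) = L" unfolding L_def mat_ln_def mat_fun_sp[OF oQ] ..
  define c0 where "c0 = \<eta> + (\<Sum>i<n. \<bar>ln (mu i)\<bar>)"
  have c0i: "\<eta> \<le> ln (mu i) + c0" if i: "i < n" for i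
  proof -
    have "\<bar>ln (mu i)\<bar> \<le> (\<Sum>i<n. \<bar>ln (mu i)\<bar>)" using i by (intro member_le_sum) auto
    thus ?thesis unfolding c0_def by linarith
  qed
  define K0 where "K0 = sp n Q (\<lambda>i. ln (mu i) + c0)"
  have K0c: "K0 \<in> carrier_mat n n" unfolding K0_def using oQ by simp
  have symK0: "K0\<^sup>T = K0" unfolding K0_def using sp_transpose[OF oQ] .
  have Kpsd: "psd_mat n (K0 - s \<cdot>\<^sub>m C)" if s: "0 \<le> s" "s \<le> \<eta>" for s
  proof -
    have sym: "(K0 - s \<cdot>\<^sub>m C)\<^sup>T = K0 - s \<cdot>\<^sub>m C"
    proof -
      have "(K0 - s \<cdot>\<^sub>m C)\<^sup>T = K0\<^sup>T - (s \<cdot>\<^sub>m C)\<^sup>T" by (rule transpose_minus) (use K0c C in auto)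
      moreover have "(s \<cdot>\<^sub>m C)\<^sup>T = s \<cdot>\<^sub>m C\<^sup>T" by (rule eq_matI) auto
      ultimately show ?thesis using symK0 symC by simp
    qed
    have "0 \<le> v \<bullet> ((K0 - s \<cdot>\<^sub>m C) *\<^sub>v v)" if v: "v \<in> carrier_vec n" for v
    proof -
      have "v \<bullet> (K0 *\<^sub>v v) = (\<Sum>i<n. (ln (mu i) + c0) * (col Q i \<bullet> v)^2)"
        unfolding K0_def by (rule quad_sp[OF oQ v])
      also have "\<dots> \<ge> (\<Sum>i<n. \<eta> * (col Q i \<bullet> v)^2)"
        using c0i by (intro sum_mono mult_right_mono) auto
      finally have a: "\<eta> * (v \<bullet> v) \<le> v \<bullet> (K0 *\<^sub>v v)"
        using parseval[OF oQ v] by (simp add: sum_distrib_left[symmetric])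
      have b: "v \<bullet> (C *\<^sub>v v) \<le> v \<bullet> v" by (rule quad_le_norm[OF C C1 v])
      have b0: "0 \<le> v \<bullet> (C *\<^sub>v v)" using C0 v unfolding psd_mat_def by auto
      have "s * (v \<bullet> (C *\<^sub>v v)) \<le> \<eta> * (v \<bullet> v)"
        using mult_mono[OF s(2) b] s(1) vv_nonneg[of v] eta b0 by simp
      thus ?thesis using quad_minus_smult[OF K0c C v, of s] a by simp
    qed
    thus ?thesis unfolding psd_mat_def sym_mat_def using sym K0c C by auto
  qed
  interpret tay n K0 C \<eta>
    by unfold_locales (use K0c C symK0 symC C0 C1 eta Kpsd in auto)
  have G: "mtrace (mat_exp (K \<eta>)) \<le> mtrace (mat_exp K0) - \<eta> * mtrace (C * mat_exp K0) + \<eta>^2 / 2 * mtrace (mat_exp K0)"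
    by (rule G')
  have expK0: "mat_exp K0 = sp n Q (\<lambda>i. exp c0 * mu i)"
    unfolding K0_def mat_exp_def mat_fun_sp[OF oQ] using mu
    by (intro sp_cong) (simp add: exp_add mult.commute)
  have tK0: "mtrace (mat_exp K0) = exp c0 * (\<Sum>i<n. mu i)"
    unfolding expK0 mtrace_sp[OF oQ] by (simp add: sum_distrib_left)
  have cK0: "mtrace (C * mat_exp K0) = exp c0 * mtrace (C * sp n Q mu)"
    unfolding expK0 mtrace_mult_sp[OF oQ C] by (simp add: sum_distrib_left mult.assoc)
  define M where "M = L - \<eta> \<cdot>\<^sub>m C"
  have Lc: "L \<in> carrier_mat n n" unfolding L_def using oQ by simp
  have Mc: "M \<in> carrier_mat n n" unfolding M_def using Lc C by auto
  have symL: "L\<^sup>T = L" unfolding L_def using sp_transpose[OF oQ] .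
  have symM: "M\<^sup>T = M"
  proof -
    have "M\<^sup>T = L\<^sup>T - (\<eta> \<cdot>\<^sub>m C)\<^sup>T" unfolding M_def by (rule transpose_minus) (use Lc C in auto)
    moreover have "(\<eta> \<cdot>\<^sub>m C)\<^sup>T = \<eta> \<cdot>\<^sub>m C\<^sup>T" by (rule eq_matI) auto
    ultimately show ?thesis unfolding M_def using symL symC by simp
  qed
  obtain R k where oR: "orth_mat n R" and eM: "M = R * mat_diag n k * R\<^sup>T" using spectral[OF Mc symM] by blast
  have eM': "M = sp n R k" using eM unfolding sp_def .
  have K0L: "K0 = L + c0 \<cdot>\<^sub>m 1\<^sub>m n"
  proof -
    have "K0 = sp n Q (\<lambda>i. ln (mu i)) + sp n Q (\<lambda>i. c0 * 1)" unfolding K0_def sp_add[OF oQ] by simp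
    also have "sp n Q (\<lambda>i. c0 * 1) = c0 \<cdot>\<^sub>m 1\<^sub>m n" using sp_smult[OF oQ, of c0 "\<lambda>_. 1"] sp_one[OF oQ] by simp
    finally show ?thesis unfolding L_def .
  qed
  have Keta: "K \<eta> = sp n R (\<lambda>i. k i + c0)"
  proof -
    have "K \<eta> = M + c0 \<cdot>\<^sub>m 1\<^sub>m n" unfolding K_def unfolding K0L M_def using Lc C by (intro eq_matI) auto
    also have "\<dots> = sp n R k + sp n R (\<lambda>i. c0 * 1)" unfolding eM' using sp_smult[OF oR, of c0 "\<lambda>_. 1"] sp_one[OF oR] by simp
    also have "\<dots> = sp n R (\<lambda>i. k i + c0)" using sp_add[OF oR] by simp
    finally show ?thesis .
  qed
  have tK: "mtrace (mat_exp (K \<eta>)) = exp c0 * mtrace (mat_exp M)"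
    unfolding Keta eM' mat_exp_def mat_fun_sp[OF oR] mtrace_sp[OF oR] by (simp add: exp_add sum_distrib_left mult.commute)
  have "exp c0 * mtrace (mat_exp M) \<le> exp c0 * ((\<Sum>i<n. mu i) - \<eta> * mtrace (C * sp n Q mu) + \<eta>^2 / 2 * (\<Sum>i<n. mu i))"
    using G unfolding tK tK0 cK0 by (simp add: algebra_simps)
  hence "mtrace (mat_exp M) \<le> (\<Sum>i<n. mu i) - \<eta> * mtrace (C * sp n Q mu) + \<eta>^2 / 2 * (\<Sum>i<n. mu i)" by simp
  thus ?thesis unfolding lnY M_def .
qed

lemma trace_sp_mono:
  assumes o: "orth_mat n Q" and U: "psd_mat n U" and le: "\<And>i. i < n \<Longrightarrow> a i \<le> b i"
  shows "mtrace (U * sp n Q a) \<le> mtrace (U * sp n Q b)"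
proof -
  have Uc: "U \<in> carrier_mat n n" using U unfolding psd_mat_def by auto
  show ?thesis unfolding mtrace_mult_sp[OF o Uc]
    using le psd_weight[OF o U] by (intro sum_mono mult_right_mono) auto
qed

lemma trace_sp_shift:
  assumes o: "orth_mat n Q" and U: "U \<in> carrier_mat n n" and tU: "mtrace U = 1"
  shows "mtrace (U * sp n Q (\<lambda>i. c + a i)) = c + mtrace (U * sp n Q a)"
proof -
  have "mtrace (U * sp n Q (\<lambda>i. c + a i)) = c * (\<Sum>i<n. col Q i \<bullet> (U *\<^sub>v col Q i)) + mtrace (U * sp n Q a)"
    unfolding mtrace_mult_sp[OF o U] by (simp add: algebra_simps sum.distrib sum_distrib_left)
  thus ?thesis using weights_sum[OF o U] tU by simp
qed

lemma trace_psd_nonneg: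
  assumes U: "psd_mat n U" and C0: "psd_mat n C"
  shows "0 \<le> mtrace (U * C)"
proof -
  have C: "C \<in> carrier_mat n n" and sC: "C\<^sup>T = C" using C0 unfolding psd_mat_def sym_mat_def by auto
  obtain S g where oS: "orth_mat n S" and e: "C = S * mat_diag n g * S\<^sup>T" using spectral[OF C sC] by blast
  have e': "C = sp n S g" using e unfolding sp_def .
  have g: "0 \<le> g i" if i: "i < n" for i
  proof -
    have "col S i \<in> carrier_vec n" using orthD[OF oS] by auto
    hence "0 \<le> col S i \<bullet> (C *\<^sub>v col S i)" using C0 unfolding psd_mat_def by auto
    thus ?thesis using eig_sp[OF oS i, of g] e' by simp
  qed
  have Uc: "U \<in> carrier_mat n n" using U unfolding psd_mat_def by auto
  have "0 \<le> mtrace (U * sp n S (\<lambda>_. 0))" using mtrace_mult_sp[OF oS Uc, of "\<lambda>_. 0"] by simp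
  also have "\<dots> \<le> mtrace (U * C)" unfolding e' by (rule trace_sp_mono[OF oS U]) (use g in auto)
  finally show ?thesis .
qed

lemma mtrace_mult_minus_smult:
  fixes U A C :: "real mat"
  assumes U: "U \<in> carrier_mat n n" and A: "A \<in> carrier_mat n n" and C: "C \<in> carrier_mat n n"
  shows "mtrace (U * (A - e \<cdot>\<^sub>m C)) = mtrace (U * A) - e * mtrace (U * C)"
proof -
  have "U * (A - e \<cdot>\<^sub>m C) = U * A - U * (e \<cdot>\<^sub>m C)"
    by (rule mult_minus_distrib_mat) (use U A C in auto)
  also have "U * (e \<cdot>\<^sub>m C) = e \<cdot>\<^sub>m (U * C)" by (rule mult_smult_distrib) (use U C in auto)
  finally show ?thesis using U A C by (simp add: mtrace_minus[of _ n] mtrace_smult[of _ n])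
qed

lemma step:
  fixes C :: "real mat" and \<eta> \<alpha> :: real
  assumes n: "n \<ge> 1" and oQ: "orth_mat n Q" and Y: "Y = sp n Q y" and ypos: "\<And>i. i < n \<Longrightarrow> 0 < y i"
    and ysum: "(\<Sum>i<n. y i) = 1"
    and C: "C \<in> carrier_mat n n" and symC: "C\<^sup>T = C"
    and C0: "psd_mat n C" and C1: "psd_mat n (1\<^sub>m n - C)" and eta: "\<eta> \<ge> 0"
    and al: "0 < \<alpha>" "\<alpha> < 1"
    and V: "V = (1 / mtrace (mat_exp (mat_ln Y - \<eta> \<cdot>\<^sub>m C))) \<cdot>\<^sub>m mat_exp (mat_ln Y - \<eta> \<cdot>\<^sub>m C)"
    and Y': "\<forall>U v. orth_mat n U \<and> V = U * mat_diag n v * U\<^sup>T \<longrightarrow>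
               Y' = U * mat_diag n (\<lambda>j. \<alpha> / real n + (1 - \<alpha>) * v j) * U\<^sup>T"
  shows "\<exists>R y'. orth_mat n R \<and> Y' = sp n R y' \<and> (\<forall>i<n. \<alpha> / real n \<le> y' i \<and> y' i \<le> 1) \<and> (\<Sum>i<n. y' i) = 1 \<and>
     (\<forall>U. psd_mat n U \<and> mtrace U = 1 \<longrightarrow>
        ln (1 - \<alpha>) + mtrace (U * mat_ln Y) - \<eta> * mtrace (U * C) + \<eta> * mtrace (C * Y) - \<eta>^2 / 2
          \<le> mtrace (U * mat_ln Y'))"
proof -
  define L where "L = sp n Q (\<lambda>i. ln (y i))"
  have lnY: "mat_ln Y = L" unfolding Y L_def mat_ln_def mat_fun_sp[OF oQ] ..
  have Lc: "L \<in> carrier_mat n n" unfolding L_def using oQ by simp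
  define M where "M = mat_ln Y - \<eta> \<cdot>\<^sub>m C"
  have Mc: "M \<in> carrier_mat n n" unfolding M_def lnY using Lc C by auto
  have symM: "M\<^sup>T = M"
  proof -
    have "M\<^sup>T = L\<^sup>T - (\<eta> \<cdot>\<^sub>m C)\<^sup>T" unfolding M_def lnY by (rule transpose_minus) (use Lc C in auto)
    moreover have "(\<eta> \<cdot>\<^sub>m C)\<^sup>T = \<eta> \<cdot>\<^sub>m C\<^sup>T" by (rule eq_matI) auto
    ultimately show ?thesis unfolding M_def lnY L_def using sp_transpose[OF oQ] symC by simp
  qed
  obtain R k where oR: "orth_mat n R" and eM: "M = R * mat_diag n k * R\<^sup>T" using spectral[OF Mc symM] by blast
  have eM': "M = sp n R k" using eM unfolding sp_def .
  define Z where "Z = mtrace (mat_exp M)"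
  have expM: "mat_exp M = sp n R (\<lambda>i. exp (k i))" unfolding eM' mat_exp_def mat_fun_sp[OF oR] ..
  have Zs: "Z = (\<Sum>i<n. exp (k i))" unfolding Z_def expM mtrace_sp[OF oR] ..
  have Zpos: "Z > 0"
  proof -
    have "exp (k 0) \<le> (\<Sum>i<n. exp (k i))" using n by (intro member_le_sum) auto
    moreover have "0 < exp (k 0)" by simp
    ultimately show ?thesis unfolding Zs by linarith
  qed
  define v where "v i = 1 / Z * exp (k i)" for i
  have "V = (1 / Z) \<cdot>\<^sub>m sp n R (\<lambda>i. exp (k i))"
    unfolding V M_def[symmetric] unfolding Z_def[symmetric] unfolding expM ..
  also have "\<dots> = sp n R v" unfolding v_def by (rule sp_smult[OF oR])
  finally have V': "V = R * mat_diag n v * R\<^sup>T" unfolding sp_def .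
  define y' where "y' j = \<alpha> / real n + (1 - \<alpha>) * v j" for j
  have Y'e: "Y' = sp n R y'" using Y' oR V' unfolding sp_def y'_def by blast
  have vpos: "0 < v i" for i unfolding v_def using Zpos by simp
  have vle: "v i \<le> 1" if i: "i < n" for i
  proof -
    have "exp (k i) \<le> Z" unfolding Zs using i by (intro member_le_sum) auto
    thus ?thesis unfolding v_def using Zpos by simp
  qed
  have vsum: "(\<Sum>i<n. v i) = 1"
  proof -
    have "(\<Sum>i<n. v i) = 1 / Z * (\<Sum>i<n. exp (k i))" unfolding v_def by (simp add: sum_distrib_left)
    thus ?thesis using Zpos Zs by simp
  qed
  have an: "\<alpha> / real n \<le> \<alpha>" using n al by (simp add: divide_le_eq)
  have anpos: "0 < \<alpha> / real n" using n al by simp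
  have bnd: "\<alpha> / real n \<le> y' i \<and> y' i \<le> 1" if i: "i < n" for i
  proof -
    have "0 \<le> (1 - \<alpha>) * v i" "(1 - \<alpha>) * v i \<le> 1 - \<alpha>" using vpos[of i] vle[OF i] al
      by (auto intro: mult_left_le)
    thus ?thesis unfolding y'_def using an by linarith
  qed
  have sum1: "(\<Sum>i<n. y' i) = 1"
  proof -
    have "(\<Sum>i<n. y' i) = real n * (\<alpha> / real n) + (1 - \<alpha>) * (\<Sum>i<n. v i)"
      unfolding y'_def by (simp add: sum.distrib sum_distrib_left)
    thus ?thesis using vsum n by simp
  qed
  have lnZ: "ln Z \<le> - \<eta> * mtrace (C * Y) + \<eta>^2 / 2"
  proof -
    have "Z \<le> (\<Sum>i<n. y i) - \<eta> * mtrace (C * sp n Q y) + \<eta>^2 / 2 * (\<Sum>i<n. y i)"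
      unfolding Z_def M_def Y by (rule coreG[OF oQ ypos C symC C0 C1 eta])
    hence "Z \<le> 1 - \<eta> * mtrace (C * Y) + \<eta>^2 / 2" using ysum Y by simp
    moreover have "ln Z \<le> Z - 1" using ln_le_minus_one[OF Zpos] .
    ultimately show ?thesis by simp
  qed
  have tr: "ln (1 - \<alpha>) + mtrace (U * mat_ln Y) - \<eta> * mtrace (U * C) + \<eta> * mtrace (C * Y) - \<eta>^2 / 2
          \<le> mtrace (U * mat_ln Y')" if U: "psd_mat n U" and tU: "mtrace U = 1" for U
  proof -
    have Uc: "U \<in> carrier_mat n n" using U unfolding psd_mat_def by auto
    have lnY': "mat_ln Y' = sp n R (\<lambda>i. ln (y' i))" unfolding Y'e mat_ln_def mat_fun_sp[OF oR] ..
    have "mtrace (U * sp n R (\<lambda>i. (ln (1 - \<alpha>) - ln Z) + k i)) \<le> mtrace (U * sp n R (\<lambda>i. ln (y' i)))"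
    proof (rule trace_sp_mono[OF oR U])
      fix i assume i: "i < n"
      have "ln (1 - \<alpha>) - ln Z + k i = ln ((1 - \<alpha>) * v i)"
        unfolding v_def using al Zpos by (simp add: ln_mult ln_div)
      also have "\<dots> \<le> ln (y' i)"
      proof -
        have p1: "0 < (1 - \<alpha>) * v i" using al vpos[of i] by simp
        hence "0 < y' i" unfolding y'_def using anpos by linarith
        moreover have "(1 - \<alpha>) * v i \<le> y' i" unfolding y'_def using anpos by linarith
        ultimately show ?thesis using p1 by (subst ln_le_cancel_iff) auto
      qed
      finally show "ln (1 - \<alpha>) - ln Z + k i \<le> ln (y' i)" .
    qed
    moreover have "mtrace (U * sp n R (\<lambda>i. (ln (1 - \<alpha>) - ln Z) + k i)) = ln (1 - \<alpha>) - ln Z + mtrace (U * M)"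
      unfolding eM' by (rule trace_sp_shift[OF oR Uc tU])
    moreover have "mtrace (U * M) = mtrace (U * mat_ln Y) - \<eta> * mtrace (U * C)"
      unfolding M_def lnY by (rule mtrace_mult_minus_smult[OF Uc Lc C])
    ultimately show ?thesis using lnZ lnY' by simp
  qed
  show ?thesis using oR Y'e bnd sum1 tr by blast
qed

lemma ln2_ge: "ln (2::real) \<ge> 1/2"
proof -
  have "ln (1/2::real) \<le> 1/2 - 1" by (rule ln_le_minus_one) simp
  thus ?thesis by (simp add: ln_div)
qed

lemma final_arith:
  fixes L T R :: real
  assumes L: "L \<ge> 1/2" and T: "T \<ge> 1" and R: "R \<le> 1 + (3/2 * L + 1) / (sqrt L / sqrt T)"
  shows "R \<le> 6 * sqrt (T * L)"
proof -
  define sL where "sL = sqrt L"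
  define sT where "sT = sqrt T"
  have sLp: "sL > 0" unfolding sL_def using L by simp
  have sTp: "sT \<ge> 1" unfolding sT_def using T by simp
  have LsL: "L = sL * sL" unfolding sL_def using L by simp
  have P: "sqrt (T * L) = sT * sL" unfolding sT_def sL_def by (simp add: real_sqrt_mult)
  have e: "(3/2 * L + 1) / (sL / sT) = 3/2 * (sT * sL) + sT / sL"
    using sLp sTp unfolding LsL by (simp add: field_simps)
  have f: "sT / sL \<le> 2 * (sT * sL)"
  proof -
    have "sT / sL = (sT * sL) / L" unfolding LsL using sLp by (simp add: field_simps)
    also have "\<dots> \<le> (sT * sL) / (1/2)" using L sLp sTp by (intro divide_left_mono) auto
    finally show ?thesis by simp
  qed
  have g: "1 \<le> 2 * (sT * sL)"
  proof -
    have "(2 * (sT * sL))^2 = 4 * (sT * sT) * L" unfolding LsL by (simp add: power2_eq_square algebra_simps)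
    also have "\<dots> \<ge> 4 * 1 * (1/2)"
    proof -
      have "1 \<le> sT * sT" using sTp mult_mono[OF sTp sTp] by simp
      thus ?thesis using L by (intro mult_mono) auto
    qed
    finally have "1 \<le> (2 * (sT * sL))^2" by simp
    hence "sqrt 1 \<le> sqrt ((2 * (sT * sL))^2)" by (rule real_sqrt_le_mono)
    also have "sqrt ((2 * (sT * sL))^2) = \<bar>2 * (sT * sL)\<bar>" by (rule real_sqrt_abs)
    also have "\<dots> = 2 * (sT * sL)" using sLp sTp by simp
    finally show ?thesis by simp
  qed
  show ?thesis using R e f g unfolding P sL_def[symmetric] sT_def[symmetric] by linarith
qed

lemma density_nonempty: assumes n: "n \<ge> 1" shows "density_mats n \<noteq> {}"
proof -
  have o: "orth_mat n (1\<^sub>m n)" unfolding orth_mat_def by simp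
  define U where "U = sp n (1\<^sub>m n) (\<lambda>_. 1 / real n)"
  have "psd_mat n U" unfolding psd_mat_def sym_mat_def U_def
    using sp_transpose[OF o] quad_sp[OF o] sp_carrier[OF o] by (auto intro!: sum_nonneg)
  moreover have "mtrace U = 1" unfolding U_def mtrace_sp[OF o] using n by simp
  ultimately show ?thesis unfolding density_mats_def by auto
qed

lemma minus_zero_mat: "A \<in> carrier_mat n n \<Longrightarrow> A - 0\<^sub>m n n = (A :: real mat)"
  by (intro eq_matI) auto

theorem theorem4p5:
  "\<exists>c::real. \<forall>(n::nat) (T::nat) (C::nat \<Rightarrow> real mat) (Y::nat \<Rightarrow> real mat) (V::nat \<Rightarrow> real mat).
     n \<ge> 1 \<longrightarrow> T \<ge> 1 \<longrightarrow>
     (\<forall>t\<in>{1..T}. C t \<in> carrier_mat n n \<and> sym_mat (C t) \<and>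
                  loewner_le n (0\<^sub>m n n) (C t) \<and> loewner_le n (C t) (1\<^sub>m n)) \<longrightarrow>
     Y 1 \<in> density_mats n \<longrightarrow> pd_mat n (Y 1) \<longrightarrow>
     (let \<alpha> = 1 / (real T + 1);
          \<eta> = sqrt (ln (real n * (1 + real T))) / sqrt (real T)
      in (\<forall>t\<in>{1..T}.
            V (t + 1) = (1 / mtrace (mat_exp (mat_ln (Y t) - \<eta> \<cdot>\<^sub>m C t)))
                          \<cdot>\<^sub>m mat_exp (mat_ln (Y t) - \<eta> \<cdot>\<^sub>m C t) \<and>
            (\<forall>U v. orth_mat n U \<and> V (t + 1) = U * mat_diag n v * U\<^sup>T \<longrightarrow>
               Y (t + 1) = U * mat_diag n (\<lambda>j. \<alpha> / real n + (1 - \<alpha>) * v j) * U\<^sup>T))) \<longrightarrow>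
     (\<forall>r s. 1 \<le> r \<and> r \<le> s \<and> s \<le> T \<longrightarrow>
        (\<Sum>t=r..s. mtrace (Y t * C t))
          - (INF U\<in>density_mats n. \<Sum>t=r..s. mtrace (U * C t))
        \<le> c * sqrt (real T * ln (real n * (1 + real T))))"
proof (intro exI[of _ 6] allI impI)
  fix n T :: nat and C Y V :: "nat \<Rightarrow> real mat" and r s :: nat
  assume n1: "n \<ge> 1" and T1: "T \<ge> 1"
    and Chyp: "\<forall>t\<in>{1..T}. C t \<in> carrier_mat n n \<and> sym_mat (C t) \<and>
                  loewner_le n (0\<^sub>m n n) (C t) \<and> loewner_le n (C t) (1\<^sub>m n)"
    and Y1d: "Y 1 \<in> density_mats n" and Y1p: "pd_mat n (Y 1)"
    and upd: "let \<alpha> = 1 / (real T + 1);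
          \<eta> = sqrt (ln (real n * (1 + real T))) / sqrt (real T)
      in (\<forall>t\<in>{1..T}.
            V (t + 1) = (1 / mtrace (mat_exp (mat_ln (Y t) - \<eta> \<cdot>\<^sub>m C t)))
                          \<cdot>\<^sub>m mat_exp (mat_ln (Y t) - \<eta> \<cdot>\<^sub>m C t) \<and>
            (\<forall>U v. orth_mat n U \<and> V (t + 1) = U * mat_diag n v * U\<^sup>T \<longrightarrow>
               Y (t + 1) = U * mat_diag n (\<lambda>j. \<alpha> / real n + (1 - \<alpha>) * v j) * U\<^sup>T))"
    and rs: "1 \<le> r \<and> r \<le> s \<and> s \<le> T"
  define \<alpha> where "\<alpha> = 1 / (real T + 1)"
  define \<eta> where "\<eta> = sqrt (ln (real n * (1 + real T))) / sqrt (real T)"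
  define L where "L = ln (real n * (1 + real T))"
  have upd': "\<forall>t\<in>{1..T}.
            V (t + 1) = (1 / mtrace (mat_exp (mat_ln (Y t) - \<eta> \<cdot>\<^sub>m C t)))
                          \<cdot>\<^sub>m mat_exp (mat_ln (Y t) - \<eta> \<cdot>\<^sub>m C t) \<and>
            (\<forall>U v. orth_mat n U \<and> V (t + 1) = U * mat_diag n v * U\<^sup>T \<longrightarrow>
               Y (t + 1) = U * mat_diag n (\<lambda>j. \<alpha> / real n + (1 - \<alpha>) * v j) * U\<^sup>T)"
    using upd unfolding Let_def \<alpha>_def \<eta>_def .
  have L2: "L \<ge> 1/2"
  proof -
    have "2 \<le> real n * (1 + real T)" using n1 T1 mult_mono[of 1 "real n" 2 "1 + real T"] by simp
    hence "ln 2 \<le> L" unfolding L_def by (subst ln_le_cancel_iff) auto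
    thus ?thesis using ln2_ge by linarith
  qed
  have Lpos: "L > 0" using L2 by simp
  have etapos: "\<eta> > 0" unfolding \<eta>_def L_def[symmetric] using Lpos T1 by simp
  have eta2: "\<eta>^2 = L / real T" unfolding \<eta>_def L_def[symmetric] using Lpos T1 by (simp add: power_divide)
  have al: "0 < \<alpha>" "\<alpha> < 1" unfolding \<alpha>_def using T1 by auto
  have lnan: "ln (\<alpha> / real n) = - L"
  proof -
    have "\<alpha> / real n = 1 / (real n * (1 + real T))" unfolding \<alpha>_def by (simp add: field_simps)
    thus ?thesis unfolding L_def using n1 by (simp add: ln_div)
  qed
  have ln1a: "- ln (1 - \<alpha>) \<le> 1 / real T"
  proof -
    have "1 - \<alpha> = 1 / (1 + 1 / real T)" unfolding \<alpha>_def using T1 by (simp add: field_simps)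
    hence "- ln (1 - \<alpha>) = ln (1 + 1 / real T)" using T1 by (simp add: ln_div)
    also have "\<dots> \<le> 1 / real T" by (rule ln_add_one_self_le_self) simp
    finally show ?thesis .
  qed
  have Cf: "C t \<in> carrier_mat n n \<and> (C t)\<^sup>T = C t \<and> psd_mat n (C t) \<and> psd_mat n (1\<^sub>m n - C t)" if t: "t \<in> {1..T}" for t
  proof -
    have h: "C t \<in> carrier_mat n n" "sym_mat (C t)" "loewner_le n (0\<^sub>m n n) (C t)" "loewner_le n (C t) (1\<^sub>m n)"
      using Chyp t by auto
    thus ?thesis unfolding loewner_le_def sym_mat_def using minus_zero_mat[OF h(1)] by auto
  qed
  define good where "good t \<longleftrightarrow> (\<exists>Q y. orth_mat n Q \<and> Y t = sp n Q y \<and> (\<forall>i<n. 0 < y i) \<and> (\<Sum>i<n. y i) = 1 \<and>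
      (2 \<le> t \<longrightarrow> (\<forall>i<n. \<alpha> / real n \<le> y i \<and> y i \<le> 1)))" for t
  define ineq where "ineq t \<longleftrightarrow> (\<forall>U. psd_mat n U \<and> mtrace U = 1 \<longrightarrow>
        ln (1 - \<alpha>) + mtrace (U * mat_ln (Y t)) - \<eta> * mtrace (U * C t) + \<eta> * mtrace (C t * Y t) - \<eta>^2 / 2
          \<le> mtrace (U * mat_ln (Y (t + 1))))" for t
  have good1: "good 1"
  proof -
    have Y1c: "Y 1 \<in> carrier_mat n n" and sY1: "(Y 1)\<^sup>T = Y 1" and tY1: "mtrace (Y 1) = 1"
      using Y1d unfolding density_mats_def psd_mat_def sym_mat_def by auto
    obtain Q y where oQ: "orth_mat n Q" and e: "Y 1 = Q * mat_diag n y * Q\<^sup>T" using spectral[OF Y1c sY1] by blast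
    have e': "Y 1 = sp n Q y" using e unfolding sp_def .
    have "0 < y i" if i: "i < n" for i
    proof -
      have cq: "col Q i \<in> carrier_vec n" using orthD[OF oQ] by auto
      have "col Q i \<noteq> 0\<^sub>v n" using col_orth[OF oQ i i] by auto
      hence "0 < col Q i \<bullet> (Y 1 *\<^sub>v col Q i)" using Y1p cq unfolding pd_mat_def by auto
      thus ?thesis using eig_sp[OF oQ i, of y] e' by simp
    qed
    moreover have "(\<Sum>i<n. y i) = 1" using tY1 unfolding e' mtrace_sp[OF oQ] .
    ultimately show ?thesis unfolding good_def using oQ e' by auto
  qed
  have stepT: "good (t + 1) \<and> ineq t" if t: "t \<in> {1..T}" and g: "good t" for t
  proof -
    obtain Q y where oQ: "orth_mat n Q" and Yt: "Y t = sp n Q y" and yp: "\<forall>i<n. 0 < y i" and ys: "(\<Sum>i<n. y i) = 1"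
      using g unfolding good_def by blast
    note cf = Cf[OF t]
    obtain R y' where oR: "orth_mat n R" and Y't: "Y (t + 1) = sp n R y'"
      and b: "\<forall>i<n. \<alpha> / real n \<le> y' i \<and> y' i \<le> 1" and s1: "(\<Sum>i<n. y' i) = 1"
      and tr: "\<forall>U. psd_mat n U \<and> mtrace U = 1 \<longrightarrow>
        ln (1 - \<alpha>) + mtrace (U * mat_ln (Y t)) - \<eta> * mtrace (U * C t) + \<eta> * mtrace (C t * Y t) - \<eta>^2 / 2
          \<le> mtrace (U * mat_ln (Y (t + 1)))"
      using step[OF n1 oQ Yt _ ys _ _ _ _ _ al, where C="C t" and V="V (t + 1)" and Y'="Y (t + 1)" and \<eta>=\<eta>]
        yp cf etapos upd' t by auto
    have "\<forall>i<n. 0 < y' i" using b al n1 by (meson divide_pos_pos less_le_trans of_nat_0_less_iff less_le_trans zero_less_one le_less_trans linorder_not_le not_one_le_zero)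
    hence "good (t + 1)" unfolding good_def using oR Y't b s1 by auto
    moreover have "ineq t" unfolding ineq_def using tr by blast
    ultimately show ?thesis ..
  qed
  have goodall: "good t" if "1 \<le> t" "t \<le> T + 1" for t
    using that
  proof (induction t)
    case 0 thus ?case by simp
  next
    case (Suc t)
    show ?case
    proof (cases "t = 0")
      case True thus ?thesis using good1 by simp
    next
      case False
      hence "t \<in> {1..T}" using Suc.prems by auto
      moreover have "good t" using Suc False by auto
      ultimately show ?thesis using stepT by auto
    qed
  qed
  have ineqall: "ineq t" if "t \<in> {1..T}" for t using stepT[OF that goodall] that by auto
  have B1: "- L \<le> mtrace (U * mat_ln (Y t)) \<and> mtrace (U * mat_ln (Y t)) \<le> 0"
    if U: "U \<in> density_mats n" and t: "2 \<le> t" "t \<le> T + 1" for U t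
  proof -
    obtain Q y where oQ: "orth_mat n Q" and Yt: "Y t = sp n Q y" and yp: "\<forall>i<n. 0 < y i"
      and b: "\<forall>i<n. \<alpha> / real n \<le> y i \<and> y i \<le> 1"
      using goodall[of t] t unfolding good_def by auto
    have lnY: "mat_ln (Y t) = sp n Q (\<lambda>i. ln (y i))" unfolding Yt mat_ln_def mat_fun_sp[OF oQ] ..
    have Up: "psd_mat n U" and tU: "mtrace U = 1" using U unfolding density_mats_def by auto
    have anp: "0 < \<alpha> / real n" using al n1 by simp
    have "- L \<le> mtrace (U * sp n Q (\<lambda>i. ln (y i)))"
    proof (rule trace_sp_lower[OF oQ Up tU])
      fix i assume i: "i < n"
      have "ln (\<alpha> / real n) \<le> ln (y i)" using b i anp yp by (subst ln_le_cancel_iff) auto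
      thus "- L \<le> ln (y i)" using lnan by simp
    qed
    moreover have "mtrace (U * sp n Q (\<lambda>i. ln (y i))) \<le> 0"
      by (rule trace_sp_upper[OF oQ Up tU]) (use b yp in auto)
    ultimately show ?thesis unfolding lnY by simp
  qed
  have B2: "0 \<le> mtrace (U * C t)" if U: "U \<in> density_mats n" and t: "t \<in> {1..T}" for U t
    using trace_psd_nonneg[of n U "C t"] U Cf[OF t] unfolding density_mats_def by auto
  have B3: "mtrace (C t * Y t) = mtrace (Y t * C t) \<and> mtrace (Y t * C t) \<le> 1" if t: "t \<in> {1..T}" for t
  proof -
    obtain Q y where oQ: "orth_mat n Q" and Yt: "Y t = sp n Q y" and yp: "\<forall>i<n. 0 < y i" and ys: "(\<Sum>i<n. y i) = 1"
      using goodall[of t] t unfolding good_def by auto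
    note cf = Cf[OF t]
    have c1: "mtrace (C t * Y t) = mtrace (Y t * C t)" unfolding Yt by (rule mtrace_comm[of _ n n]) (use cf oQ in auto)
    have "mtrace (C t * Y t) = (\<Sum>i<n. y i * (col Q i \<bullet> (C t *\<^sub>v col Q i)))"
      unfolding Yt using mtrace_mult_sp[OF oQ] cf by auto
    also have "\<dots> \<le> (\<Sum>i<n. y i * 1)"
      using C_bounds(2)[OF oQ _ ] cf yp by (intro sum_mono mult_left_mono) auto
    finally show ?thesis using c1 ys by simp
  qed
  have main: "(\<Sum>t=r..s. mtrace (Y t * C t)) - (\<Sum>t=r..s. mtrace (U * C t)) \<le> 1 + (3/2 * L + 1) / \<eta>"
    if U: "U \<in> density_mats n" for U
  proof -
    have Up: "psd_mat n U" and tU: "mtrace U = 1" using U unfolding density_mats_def by auto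
    define a where "a t = mtrace (Y t * C t) - mtrace (U * C t)" for t
    define phi where "phi t = mtrace (U * mat_ln (Y t))" for t
    have tail: "(\<Sum>t=r'..s. a t) \<le> (3/2 * L + 1) / \<eta>" if r': "2 \<le> r'" for r'
    proof (cases "r' \<le> s")
      case False
      hence "(\<Sum>t=r'..s. a t) = 0" by simp
      thus ?thesis using Lpos etapos by simp
    next
      case True
      have each: "\<eta> * a t \<le> phi (Suc t) - phi t - ln (1 - \<alpha>) + \<eta>^2 / 2" if t: "t \<in> {r'..s}" for t
      proof -
        have tT: "t \<in> {1..T}" using t r' rs by auto
        have "ln (1 - \<alpha>) + phi t - \<eta> * mtrace (U * C t) + \<eta> * mtrace (C t * Y t) - \<eta>^2 / 2 \<le> phi (t + 1)"
          using ineqall[OF tT] Up tU unfolding ineq_def phi_def by blast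
        thus ?thesis using B3[OF tT] unfolding a_def by (simp add: algebra_simps)
      qed
      have "\<eta> * (\<Sum>t=r'..s. a t) = (\<Sum>t=r'..s. \<eta> * a t)" by (simp add: sum_distrib_left)
      also have "\<dots> \<le> (\<Sum>t=r'..s. (phi (Suc t) - phi t) + (\<eta>^2 / 2 - ln (1 - \<alpha>)))"
        using each by (intro sum_mono) (simp add: algebra_simps)
      also have "\<dots> = (phi (Suc s) - phi r') + real (Suc s - r') * (\<eta>^2 / 2 - ln (1 - \<alpha>))"
        using True by (simp add: sum.distrib sum_Suc_diff)
      also have "\<dots> \<le> L + real T * (\<eta>^2 / 2 - ln (1 - \<alpha>))"
      proof -
        have "phi (Suc s) \<le> 0" using B1[OF U, of "Suc s"] rs True r' unfolding phi_def by auto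
        moreover have "- L \<le> phi r'" using B1[OF U, of r'] rs True r' unfolding phi_def by auto
        moreover have "real (Suc s - r') * (\<eta>^2 / 2 - ln (1 - \<alpha>)) \<le> real T * (\<eta>^2 / 2 - ln (1 - \<alpha>))"
        proof (rule mult_right_mono)
          have "Suc s - r' \<le> T" using rs r' by linarith
          thus "real (Suc s - r') \<le> real T" by simp
          have "ln (1 - \<alpha>) < 0" using al by simp
          moreover have "0 \<le> \<eta>^2" by simp
          ultimately show "0 \<le> \<eta>^2 / 2 - ln (1 - \<alpha>)" by linarith
        qed
        ultimately show ?thesis by linarith
      qed
      also have "\<dots> \<le> L + (L / 2 + 1)"
      proof -
        have "real T * (\<eta>^2 / 2) = L / 2" unfolding eta2 using T1 by simp
        moreover have "real T * (- ln (1 - \<alpha>)) \<le> real T * (1 / real T)" using ln1a T1 by (intro mult_left_mono) auto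
        ultimately show ?thesis using T1 by (simp add: algebra_simps)
      qed
      finally have "\<eta> * (\<Sum>t=r'..s. a t) \<le> 3/2 * L + 1" by simp
      thus ?thesis using etapos by (simp add: field_simps)
    qed
    have "(\<Sum>t=r..s. mtrace (Y t * C t)) - (\<Sum>t=r..s. mtrace (U * C t)) = (\<Sum>t=r..s. a t)"
      unfolding a_def by (simp add: sum_subtractf)
    also have "\<dots> \<le> 1 + (3/2 * L + 1) / \<eta>"
    proof (cases "r = 1")
      case True
      have "(\<Sum>t=r..s. a t) = a 1 + (\<Sum>t=2..s. a t)"
        using True rs by (simp add: sum.atLeast_Suc_atMost numeral_2_eq_2)
      moreover have "a 1 \<le> 1" using B3[of 1] B2[OF U, of 1] T1 unfolding a_def by auto
      moreover have "(\<Sum>t=2..s. a t) \<le> (3/2 * L + 1) / \<eta>" by (rule tail) simp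
      ultimately show ?thesis by linarith
    next
      case False
      hence "2 \<le> r" using rs by auto
      thus ?thesis using tail[of r] by simp
    qed
    finally show ?thesis .
  qed
  have "(\<Sum>t=r..s. mtrace (Y t * C t)) - 6 * sqrt (real T * L) \<le> (INF U\<in>density_mats n. \<Sum>t=r..s. mtrace (U * C t))"
  proof (rule cINF_greatest[OF density_nonempty[OF n1]])
    fix U assume U: "U \<in> density_mats n"
    have "(\<Sum>t=r..s. mtrace (Y t * C t)) - (\<Sum>t=r..s. mtrace (U * C t)) \<le> 6 * sqrt (real T * L)"
      by (rule final_arith[OF L2 _ main[OF U, unfolded \<eta>_def L_def[symmetric]]]) (use T1 in simp)
    thus "(\<Sum>t=r..s. mtrace (Y t * C t)) - 6 * sqrt (real T * L) \<le> (\<Sum>t=r..s. mtrace (U * C t))" by simp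
  qed
  thus "(\<Sum>t=r..s. mtrace (Y t * C t)) - (INF U\<in>density_mats n. \<Sum>t=r..s. mtrace (U * C t))
        \<le> 6 * sqrt (real T * ln (real n * (1 + real T)))" unfolding L_def by simp
qed

end
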